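(* Let $\mathcal C$ be an $(n,k)$ linear code over $\mathrm{GF}(q^m)$ (a $k$-dimensional $\mathrm{GF}(q^m)$-subspace of $\mathrm{GF}(q^m)^n$) and $\mathcal C^\perp$ its dual. Let $W^{\mathrm R}_{\mathcal C}(x,y)=\sum_{i=0}^n A_i y^i x^{n-i}$ and $W^{\mathrm R}_{\mathcal C^\perp}(x,y)=\sum_{j=0}^n B_j y^j x^{n-j}$ be their rank weight enumerators. Then $$W^{\mathrm R}_{\mathcal C^\perp}(x,y)=\frac{1}{|\mathcal C|}\,\bar W^{\mathrm R}_{\mathcal C}\big(x+(q^m-1)y,\;x-y\big),$$ where $\bar W^{\mathrm R}_{\mathcal C}$ is the $q$-transform of $W^{\mathrm R}_{\mathcal C}$; equivalently, $$\sum_{j=0}^n B_j y^j x^{n-j}=q^{-mk}\sum_{i=0}^n A_i\,(x-y)^{[i]} * \big[x+(q^m-1)y\big]^{[n-i]}.$$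
   Context: The rank $\mathrm{rk}(\mathbf v)$ of $\mathbf v\in\mathrm{GF}(q^m)^n$ is the maximum number of its coordinates linearly independent over $\mathrm{GF}(q)$. The rank weight enumerator of a code $\mathcal C\subseteq\mathrm{GF}(q^m)^n$ is $W^{\mathrm R}_{\mathcal C}(x,y)=\sum_{\mathbf v\in\mathcal C} y^{\mathrm{rk}(\mathbf v)}x^{n-\mathrm{rk}(\mathbf v)}$. The dual $\mathcal C^\perp$ is taken with respect to the standard inner product $\mathbf u\cdot\mathbf v=\sum_i u_iv_i$ on $\mathrm{GF}(q^m)^n$. $q$-product: consider homogeneous polynomials $a(x,y;m)=\sum_{i=0}^r a_i(m)y^ix^{r-i}$ and $b(x,y;m)=\sum_{j=0}^s b_j(m)y^jx^{s-j}$ whose coefficients are real functions of the parameter $m$ (coefficients with indices out of range are zero). Their $q$-product is the degree-$(r+s)$ homogeneous polynomial $a*b=\sum_{u=0}^{r+s}c_u(m)y^ux^{r+s-u}$ with $c_u(m)=\sum_{i=0}^u q^{is}a_i(m)b_{u-i}(m-i)$. The $q$-powers are $a^{[0]}=1$, $a^{[n]}=a^{[n-1]}*a$. Here $x+(q^m-1)y$ has coefficients $1$ and $q^m-1$ (the latter depending on $m$), and $x-y$ has constant coefficients $1,-1$. The $q$-transform of $a(x,y;m)=\sum_{i=0}^r a_i(m)y^ix^{r-i}$ is $\bar a(x,y;m)=\sum_{i=0}^r a_i(m)\,y^{[i]}*x^{[r-i]}$, and $\bar W(X,Y)$ means this expression with $x$ replaced by $X$ and $y$ by $Y$ (so $\bar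 W^{\mathrm R}_{\mathcal C}(x+(q^m-1)y,x-y)=\sum_i A_i (x-y)^{[i]}*[x+(q^m-1)y]^{[n-i]}$). *)

theory Defs
  imports Complex_Main
begin

definition is_subfield :: "'a::field set \<Rightarrow> bool" where
  "is_subfield K \<longleftrightarrow> 0 \<in> K \<and> 1 \<in> K \<and>
     (\<forall>a\<in>K. \<forall>b\<in>K. a + b \<in> K \<and> a * b \<in> K) \<and>
     (\<forall>a\<in>K. - a \<in> K) \<and> (\<forall>a\<in>K. a \<noteq> 0 \<longrightarrow> inverse a \<in> K)"

(* vectors of GF(q^m)^n are functions nat => 'a vanishing outside {..<n} *)
definition vecs :: "nat \<Rightarrow> (nat \<Rightarrow> 'a::zero) set" where
  "vecs n = {v. \<forall>i\<ge>n. v i = 0}"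

definition lin_indep_over :: "'a::field set \<Rightarrow> ('b \<Rightarrow> 'a) \<Rightarrow> 'b set \<Rightarrow> bool" where
  "lin_indep_over S f I \<longleftrightarrow>
     (\<forall>c. (\<forall>i\<in>I. c i \<in> S) \<and> (\<Sum>i\<in>I. c i * f i) = 0 \<longrightarrow> (\<forall>i\<in>I. c i = 0))"

definition rk :: "'a::field set \<Rightarrow> nat \<Rightarrow> (nat \<Rightarrow> 'a) \<Rightarrow> nat" where
  "rk K n v = Max {card I | I. I \<subseteq> {..<n} \<and> lin_indep_over K v I}"

definition vadd :: "(nat \<Rightarrow> 'a::field) \<Rightarrow> (nat \<Rightarrow> 'a) \<Rightarrow> nat \<Rightarrow> 'a" where
  "vadd u v = (\<lambda>i. u i + v i)"

definition vscale :: "'a::field \<Rightarrow> (nat \<Rightarrow> 'a) \<Rightarrow> nat \<Rightarrow> 'a" where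
  "vscale c v = (\<lambda>i. c * v i)"

definition vlincomb :: "(nat \<Rightarrow> 'a::field) \<Rightarrow> (nat \<Rightarrow> nat \<Rightarrow> 'a) \<Rightarrow> nat \<Rightarrow> nat \<Rightarrow> 'a" where
  "vlincomb c b k = (\<lambda>i. \<Sum>j<k. c j * b j i)"

definition linear_code :: "nat \<Rightarrow> nat \<Rightarrow> (nat \<Rightarrow> 'a::field) set \<Rightarrow> bool" where
  "linear_code n k C \<longleftrightarrow> C \<subseteq> vecs n \<and>
     (\<exists>b. (\<forall>j<k. b j \<in> vecs n) \<and>
          (\<forall>c. vlincomb c b k = (\<lambda>_. 0) \<longrightarrow> (\<forall>j<k. c j = 0)) \<and>
          C = {vlincomb c b k | c. True})"

definition dual_code :: "nat \<Rightarrow> (nat \<Rightarrow> 'a::field) set \<Rightarrow> (nat \<Rightarrow> 'a) set" where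
  "dual_code n C = {v \<in> vecs n. \<forall>u\<in>C. (\<Sum>i<n. u i * v i) = 0}"

definition rank_dist :: "'a::field set \<Rightarrow> nat \<Rightarrow> (nat \<Rightarrow> 'a) set \<Rightarrow> nat \<Rightarrow> nat" where
  "rank_dist K n C i = card {v \<in> C. rk K n v = i}"

(* (r, a): degree r, coefficients a i m of y^i x^(r-i), as real functions of the real parameter m *)
type_synonym hpoly = "nat \<times> (nat \<Rightarrow> real \<Rightarrow> real)"

definition hcoeff :: "hpoly \<Rightarrow> nat \<Rightarrow> real \<Rightarrow> real" where
  "hcoeff p i m = (if i \<le> fst p then snd p i m else 0)"

definition heval :: "hpoly \<Rightarrow> real \<Rightarrow> real \<Rightarrow> real \<Rightarrow> real" where
  "heval p m x y = (\<Sum>u\<le>fst p. hcoeff p u m * y ^ u * x ^ (fst p - u))"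

definition qprod :: "nat \<Rightarrow> hpoly \<Rightarrow> hpoly \<Rightarrow> hpoly" where
  "qprod q a b = (fst a + fst b,
     \<lambda>u m. \<Sum>i\<le>u. real q ^ (i * fst b) * hcoeff a i m * hcoeff b (u - i) (m - real i))"

definition hone :: hpoly where "hone = (0, \<lambda>i m. 1)"

fun qpow :: "nat \<Rightarrow> hpoly \<Rightarrow> nat \<Rightarrow> hpoly" where
  "qpow q a 0 = hone"
| "qpow q a (Suc n) = qprod q (qpow q a n) a"

definition x_minus_y :: hpoly where
  "x_minus_y = (1, \<lambda>i m. if i = 0 then 1 else -1)"

definition x_plus_qm1_y :: "nat \<Rightarrow> hpoly" where
  "x_plus_qm1_y q = (1, \<lambda>i m. if i = 0 then 1 else real q powr m - 1)"

(* \<bar>W\<bar>(X,Y) for W = \<Sum>_{i\<le>n} A_i y^i x^(n-i): \<Sum> A_i Y^[i] * X^[n-i] *)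
definition qtransform_at :: "nat \<Rightarrow> nat \<Rightarrow> (nat \<Rightarrow> real) \<Rightarrow> hpoly \<Rightarrow> hpoly \<Rightarrow> hpoly" where
  "qtransform_at q n A X Y =
     (n, \<lambda>u m. \<Sum>i\<le>n. A i * hcoeff (qprod q (qpow q Y i) (qpow q X (n - i))) u m)"

end

theory Submission
  imports Defs "HOL-Library.Function_Algebras" "HOL-Library.FuncSet"
begin

definition gam :: "nat \<Rightarrow> nat \<Rightarrow> nat \<Rightarrow> real" where
  "gam q d s = (\<Prod>k<s. real q ^ d - real q ^ k)"

definition gb :: "nat \<Rightarrow> nat \<Rightarrow> nat \<Rightarrow> real" where
  "gb q d s = gam q d s / gam q s s"

lemma gam_Suc: "gam q d (Suc s) = gam q d s * (real q ^ d - real q ^ s)"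
  by (simp add: gam_def)

lemma gam_Suc_Suc: "gam q (Suc d) (Suc s) = (real q ^ Suc d - 1) * real q ^ s * gam q d s"
proof -
  have "gam q (Suc d) (Suc s) = (real q ^ Suc d - 1) * (\<Prod>k<s. real q * (real q ^ d - real q ^ k))"
    unfolding gam_def prod.lessThan_Suc_shift by (simp add: algebra_simps)
  also have "(\<Prod>k<s. real q * (real q ^ d - real q ^ k)) = real q ^ s * gam q d s"
    by (simp add: gam_def prod.distrib)
  finally show ?thesis by simp
qed

lemma gam_zero: "d < s \<Longrightarrow> gam q d s = 0"
  unfolding gam_def by (rule prod_zero) auto

lemma gam_nz: assumes "q \<ge> 2" "s \<le> d" shows "gam q d s \<noteq> 0"
proof -
  have h: "\<forall>k\<in>{..<s}. real q ^ d - real q ^ k \<noteq> 0"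
  proof
    fix k assume "k \<in> {..<s}"
    hence "real q ^ k < real q ^ d" using assms by (intro power_strict_increasing) auto
    thus "real q ^ d - real q ^ k \<noteq> 0" by simp
  qed
  show ?thesis unfolding gam_def using h by simp
qed

lemma gb_0[simp]: "gb q d 0 = 1" by (simp add: gb_def gam_def)
lemma gb_zero: "d < s \<Longrightarrow> gb q d s = 0" by (simp add: gb_def gam_zero)
lemma gb_diag: "q \<ge> 2 \<Longrightarrow> gb q d d = 1" using gam_nz[of q d d] by (simp add: gb_def)

lemma gb_P2: assumes "q \<ge> 2"
  shows "gb q (Suc d) (Suc s) = real q ^ Suc s * gb q d (Suc s) + gb q d s"
proof -
  define G where "G = gam q d s"
  define B where "B = gam q s s"
  have Bnz: "B \<noteq> 0" using gam_nz[OF assms] by (auto simp: B_def)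
  have q1: "real q ^ Suc s - 1 \<noteq> 0"
  proof -
    have "1 < real q ^ Suc s" using assms by (intro one_less_power) auto
    thus ?thesis by simp
  qed
  have qs: "real q ^ s \<noteq> 0" using assms by simp
  have g1: "gam q (Suc d) (Suc s) = (real q ^ Suc d - 1) * real q ^ s * G" by (simp add: gam_Suc_Suc G_def)
  have g2: "gam q (Suc s) (Suc s) = (real q ^ Suc s - 1) * real q ^ s * B" by (simp add: gam_Suc_Suc B_def)
  have g3: "gam q d (Suc s) = G * (real q ^ d - real q ^ s)" by (simp add: gam_Suc G_def)
  show ?thesis unfolding gb_def g1 g2 g3 G_def[symmetric] B_def[symmetric] using Bnz q1 qs
    by (simp add: field_simps)
qed

lemma gb_P1: assumes "q \<ge> 2"
  shows "gb q (Suc d) (Suc s) = gb q d (Suc s) + real q ^ (d - s) * gb q d s"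
proof (cases "s \<le> d")
  case True
  define G where "G = gam q d s"
  define B where "B = gam q s s"
  have Bnz: "B \<noteq> 0" using gam_nz[OF assms] by (auto simp: B_def)
  have q1: "real q ^ Suc s - 1 \<noteq> 0"
  proof -
    have "1 < real q ^ Suc s" using assms by (intro one_less_power) auto
    thus ?thesis by simp
  qed
  have qs: "real q ^ s \<noteq> 0" using assms by simp
  have g1: "gam q (Suc d) (Suc s) = (real q ^ Suc d - 1) * real q ^ s * G" by (simp add: gam_Suc_Suc G_def)
  have g2: "gam q (Suc s) (Suc s) = (real q ^ Suc s - 1) * real q ^ s * B" by (simp add: gam_Suc_Suc B_def)
  have g3: "gam q d (Suc s) = G * (real q ^ d - real q ^ s)" by (simp add: gam_Suc G_def)
  have e: "real q ^ d = real q ^ (d - s) * real q ^ s" using True by (simp add: power_add[symmetric])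
  show ?thesis unfolding gb_def g1 g2 g3 G_def[symmetric] B_def[symmetric] using Bnz q1 qs
    by (simp add: field_simps) (simp add: algebra_simps e)
next
  case False thus ?thesis by (simp add: gb_zero)
qed

lemma hcoeff_out: "fst a < i \<Longrightarrow> hcoeff a i m = 0" by (simp add: hcoeff_def)

lemma fst_qprod[simp]: "fst (qprod q a b) = fst a + fst b" by (simp add: qprod_def)
lemma fst_hone[simp]: "fst hone = 0" by (simp add: hone_def)
lemma fst_qpow[simp]: "fst (qpow q a i) = i * fst a" by (induct i) auto

lemma hcoeff_qprod: "hcoeff (qprod q a b) u m =
   (\<Sum>i\<le>u. real q ^ (i * fst b) * hcoeff a i m * hcoeff b (u - i) (m - real i))"
proof (cases "u \<le> fst a + fst b")
  case True thus ?thesis unfolding qprod_def by (subst hcoeff_def) simp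
next
  case False
  have "real q ^ (i * fst b) * hcoeff a i m * hcoeff b (u - i) (m - real i) = 0" if "i \<le> u" for i
  proof (cases "i \<le> fst a")
    case True hence "fst b < u - i" using False by auto
    thus ?thesis by (simp add: hcoeff_out)
  next
    case False thus ?thesis by (simp add: hcoeff_out)
  qed
  hence "(\<Sum>i\<le>u. real q ^ (i * fst b) * hcoeff a i m * hcoeff b (u - i) (m - real i)) = 0"
    by (intro sum.neutral) blast
  moreover have "hcoeff (qprod q a b) u m = 0" using False by (simp add: hcoeff_out)
  ultimately show ?thesis by simp
qed

lemma qprod_assoc: "hcoeff (qprod q (qprod q a b) c) u m = hcoeff (qprod q a (qprod q b c)) u m"
proof -
  define s where "s = fst b"
  define t where "t = fst c"
  define F where "F = (\<lambda>i l. real q ^ ((i + l) * t) * real q ^ (i * s) * hcoeff a i m *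
      hcoeff b l (m - real i) * hcoeff c (u - (i + l)) (m - real i - real l))"
  have "hcoeff (qprod q (qprod q a b) c) u m =
     (\<Sum>k\<le>u. \<Sum>i\<le>k. F i (k - i))"
    unfolding hcoeff_qprod F_def s_def t_def
    by (simp add: sum_distrib_left sum_distrib_right algebra_simps)
  also have "\<dots> = (\<Sum>(i,l)\<in>{(i,l). i + l \<le> u}. F i l)"
    by (rule sum.triangle_reindex_eq[symmetric])
  also have "\<dots> = (\<Sum>i\<le>u. \<Sum>l\<le>u - i. F i l)"
  proof -
    have e: "{(i,l). i + l \<le> u} = (SIGMA i:{..u}. {..u - i})" by auto
    show ?thesis unfolding e by (simp add: sum.Sigma)
  qed
  also have "\<dots> = hcoeff (qprod q a (qprod q b c)) u m"
    unfolding hcoeff_qprod F_def s_def t_def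
    by (auto simp: sum_distrib_left sum_distrib_right algebra_simps power_add power_mult intro!: sum.cong)
  finally show ?thesis .
qed

definition Psi :: "nat \<Rightarrow> nat \<Rightarrow> hpoly \<Rightarrow> real \<Rightarrow> real" where
  "Psi q s a m = (\<Sum>j\<le>fst a. gb q (fst a - j) s * hcoeff a j m)"

lemma hcoeff_qprod1:
  assumes "fst b = 1" "\<And>m'. hcoeff b 0 m' = 1"
  shows "hcoeff (qprod q a b) u m = real q ^ u * hcoeff a u m +
     (if u = 0 then 0 else real q ^ (u - 1) * hcoeff a (u - 1) m * hcoeff b 1 (m - real (u - 1)))"
proof (cases u)
  case 0 thus ?thesis by (simp add: hcoeff_qprod assms)
next
  case (Suc v)
  have z: "(\<Sum>i<v. real q ^ (i * fst b) * hcoeff a i m * hcoeff b (u - i) (m - real i)) = 0"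
    by (rule sum.neutral) (auto simp: Suc assms hcoeff_out)
  have "{..u} = insert u (insert v {..<v})" using Suc by auto
  hence "hcoeff (qprod q a b) u m = real q ^ (u * fst b) * hcoeff a u m * hcoeff b (u - u) (m - real u)
     + (real q ^ (v * fst b) * hcoeff a v m * hcoeff b (u - v) (m - real v)
     + (\<Sum>i<v. real q ^ (i * fst b) * hcoeff a i m * hcoeff b (u - i) (m - real i)))"
    unfolding hcoeff_qprod using Suc by simp
  thus ?thesis using Suc z by (simp add: assms)
qed

lemma Psi_qprod1:
  assumes "fst b = 1" "\<And>m'. hcoeff b 0 m' = 1"
  shows "Psi q s (qprod q a b) m = (\<Sum>u\<le>fst a. hcoeff a u m * real q ^ u *
      (gb q (Suc (fst a) - u) s + gb q (fst a - u) s * hcoeff b 1 (m - real u)))"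
proof -
  define r where "r = fst a"
  have "Psi q s (qprod q a b) m = (\<Sum>u\<le>Suc r. gb q (Suc r - u) s * (real q ^ u * hcoeff a u m))
     + (\<Sum>u\<le>Suc r. gb q (Suc r - u) s * (if u = 0 then 0 else real q ^ (u - 1) * hcoeff a (u - 1) m * hcoeff b 1 (m - real (u - 1))))"
    unfolding Psi_def hcoeff_qprod1[OF assms] using assms by (simp add: r_def algebra_simps sum.distrib)
  also have "(\<Sum>u\<le>Suc r. gb q (Suc r - u) s * (real q ^ u * hcoeff a u m)) =
      (\<Sum>u\<le>r. gb q (Suc r - u) s * (real q ^ u * hcoeff a u m))"
    by (simp add: hcoeff_out r_def)
  also have "(\<Sum>u\<le>Suc r. gb q (Suc r - u) s * (if u = 0 then 0 else real q ^ (u - 1) * hcoeff a (u - 1) m * hcoeff b 1 (m - real (u - 1))))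
      = (\<Sum>u\<le>r. gb q (r - u) s * (real q ^ u * hcoeff a u m * hcoeff b 1 (m - real u)))"
    by (subst sum.atMost_Suc_shift) simp
  finally show ?thesis unfolding r_def[symmetric]
    by (simp add: sum.distrib[symmetric] algebra_simps)
qed

lemma hc_Y0[simp]: "hcoeff x_minus_y 0 m = 1" by (simp add: hcoeff_def x_minus_y_def)
lemma hc_Y1[simp]: "hcoeff x_minus_y 1 m = -1" by (simp add: hcoeff_def x_minus_y_def)
lemma fst_Y[simp]: "fst x_minus_y = 1" by (simp add: x_minus_y_def)
lemma hc_X0[simp]: "hcoeff (x_plus_qm1_y q) 0 m = 1" by (simp add: hcoeff_def x_plus_qm1_y_def)
lemma hc_X1[simp]: "hcoeff (x_plus_qm1_y q) 1 m = real q powr m - 1" by (simp add: hcoeff_def x_plus_qm1_y_def)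
lemma hc_Y1'[simp]: "hcoeff x_minus_y (Suc 0) m = -1" by (simp add: hcoeff_def x_minus_y_def)
lemma hc_X1'[simp]: "hcoeff (x_plus_qm1_y q) (Suc 0) m = real q powr m - 1" by (simp add: hcoeff_def x_plus_qm1_y_def)
lemma fst_X[simp]: "fst (x_plus_qm1_y q) = 1" by (simp add: x_plus_qm1_y_def)

lemma gb_shift_mult: assumes "q \<ge> 2" "u \<le> r"
  shows "real q ^ u * (real q ^ (r - u - s) * gb q (r - u) s) = real q ^ (r - s) * gb q (r - u) s"
proof (cases "s \<le> r - u")
  case True
  hence "u + (r - u - s) = r - s" using assms(2) by presburger
  thus ?thesis by (metis mult.assoc power_add)
next
  case False thus ?thesis by (simp add: gb_zero)
qed

lemma Psi_Y0: "Psi q 0 (qprod q a x_minus_y) m = 0"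
  by (subst Psi_qprod1) (auto intro!: sum.neutral)

lemma Psi_YS: assumes "q \<ge> 2"
  shows "Psi q (Suc s) (qprod q a x_minus_y) m = real q ^ (fst a - s) * Psi q s a m"
proof -
  have "Psi q (Suc s) (qprod q a x_minus_y) m =
    (\<Sum>u\<le>fst a. hcoeff a u m * (real q ^ u * (real q ^ (fst a - u - s) * gb q (fst a - u) s)))"
    by (subst Psi_qprod1) (auto intro!: sum.cong simp: Suc_diff_le gb_P1[OF assms] algebra_simps)
  also have "\<dots> = (\<Sum>u\<le>fst a. hcoeff a u m * (real q ^ (fst a - s) * gb q (fst a - u) s))"
    by (intro sum.cong refl) (simp only: gb_shift_mult[OF assms] atMost_iff)
  also have "\<dots> = real q ^ (fst a - s) * Psi q s a m"
    unfolding Psi_def by (simp add: sum_distrib_left algebra_simps)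
  finally show ?thesis .
qed

lemma powr_shift: assumes "q \<ge> 2" shows "real q ^ u * real q powr (m - real u) = real q powr m"
  using assms by (simp add: powr_diff powr_realpow)

lemma Psi_X0: assumes "q \<ge> 2"
  shows "Psi q 0 (qprod q a (x_plus_qm1_y q)) m = real q powr m * Psi q 0 a m"
proof -
  have "Psi q 0 (qprod q a (x_plus_qm1_y q)) m = (\<Sum>u\<le>fst a. hcoeff a u m * (real q ^ u * real q powr (m - real u)))"
    by (subst Psi_qprod1) (auto intro!: sum.cong simp: algebra_simps)
  also have "\<dots> = real q powr m * Psi q 0 a m"
    unfolding Psi_def powr_shift[OF assms] by (simp add: sum_distrib_left algebra_simps)
  finally show ?thesis .
qed

lemma Psi_XS: assumes "q \<ge> 2"
  shows "Psi q (Suc s) (qprod q a (x_plus_qm1_y q)) m =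
     real q ^ (fst a - s) * Psi q s a m + real q powr m * Psi q (Suc s) a m"
proof -
  have "Psi q (Suc s) (qprod q a (x_plus_qm1_y q)) m =
    (\<Sum>u\<le>fst a. hcoeff a u m * (real q ^ u * (real q ^ (fst a - u - s) * gb q (fst a - u) s))
       + hcoeff a u m * (real q ^ u * real q powr (m - real u)) * gb q (fst a - u) (Suc s))"
    by (subst Psi_qprod1) (auto intro!: sum.cong simp: Suc_diff_le gb_P1[OF assms] algebra_simps)
  also have "\<dots> = (\<Sum>u\<le>fst a. hcoeff a u m * (real q ^ (fst a - s) * gb q (fst a - u) s)
       + hcoeff a u m * real q powr m * gb q (fst a - u) (Suc s))"
    by (intro sum.cong refl) (simp only: gb_shift_mult[OF assms] powr_shift[OF assms] atMost_iff)
  also have "\<dots> = real q ^ (fst a - s) * Psi q s a m + real q powr m * Psi q (Suc s) a m"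
    unfolding Psi_def by (simp add: sum.distrib sum_distrib_left algebra_simps)
  finally show ?thesis .
qed

lemma hcoeff_hone: "hcoeff hone i m = (if i = 0 then 1 else 0)"
  by (simp add: hcoeff_def hone_def)

lemma Psi_hone: "Psi q s hone m = (if s = 0 then 1 else 0)"
  by (simp add: Psi_def hcoeff_def hone_def gb_zero)

lemma Psi_Ypow: assumes "q \<ge> 2"
  shows "Psi q s (qpow q x_minus_y i) m = (if s = i then 1 else 0)"
proof (induct i arbitrary: s)
  case 0 thus ?case by (simp add: Psi_hone)
next
  case (Suc i)
  show ?case
  proof (cases s)
    case 0 thus ?thesis by (simp add: Psi_Y0)
  next
    case (Suc s') thus ?thesis using Suc.hyps by (simp add: Psi_YS[OF assms])
  qed
qed

definition PP :: "nat \<Rightarrow> nat \<Rightarrow> nat \<Rightarrow> hpoly" where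
  "PP q i k = qprod q (qpow q x_minus_y i) (qpow q (x_plus_qm1_y q) k)"

lemma fst_PP[simp]: "fst (PP q i k) = i + k" by (simp add: PP_def)

lemma Psi_PP0: "Psi q s (PP q i 0) m = Psi q s (qpow q x_minus_y i) m"
proof -
  have "hcoeff (PP q i 0) u m = hcoeff (qpow q x_minus_y i) u m" for u
  proof -
    have "(\<Sum>j\<le>u. hcoeff (qpow q x_minus_y i) j m * hcoeff hone (u - j) (m - real j))
        = (\<Sum>j\<in>{u}. hcoeff (qpow q x_minus_y i) j m * hcoeff hone (u - j) (m - real j))"
      by (rule sum.mono_neutral_right) (auto simp: hcoeff_hone)
    thus ?thesis by (simp add: PP_def hcoeff_qprod hcoeff_hone)
  qed
  thus ?thesis by (simp add: Psi_def)
qed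

lemma Psi_PPS: "Psi q s (PP q i (Suc k)) m = Psi q s (qprod q (PP q i k) (x_plus_qm1_y q)) m"
  unfolding Psi_def PP_def qpow.simps qprod_assoc by simp

lemma Psi_PP: assumes "q \<ge> 2"
  shows "Psi q s (PP q i k) m =
    (if s \<le> i + k then (real q powr m) ^ (i + k - s) * gb q k (i + k - s) else 0)"
proof (induct k arbitrary: s)
  case 0
  show ?case by (simp add: Psi_PP0 Psi_Ypow[OF assms] gb_zero)
next
  case (Suc k)
  note IH = Suc.hyps
  show ?case
  proof (cases s)
    case 0
    have "gb q (Suc k) (Suc (i + k)) = gb q k (i + k)"
      using gb_P2[OF assms, of k "i + k"] by (simp add: gb_zero)
    thus ?thesis using 0 IH[of 0] by (simp add: Psi_PPS Psi_X0[OF assms])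
  next
    case (Suc s')
    have e: "Psi q (Suc s') (PP q i (Suc k)) m = real q ^ (i + k - s') * Psi q s' (PP q i k) m
       + real q powr m * Psi q (Suc s') (PP q i k) m"
      by (simp add: Psi_PPS Psi_XS[OF assms])
    consider "s' < i + k" | "s' = i + k" | "s' > i + k" by linarith
    thus ?thesis
    proof cases
      case 1
      then obtain j where j: "i + k - s' = Suc j" by (metis Suc_diff_Suc)
      have j2: "i + k - Suc s' = j" using j by simp
      show ?thesis unfolding Suc e IH using 1 j j2
        by (simp add: gb_P2[OF assms] algebra_simps)
    next
      case 2 thus ?thesis unfolding Suc e IH by simp
    next
      case 3 thus ?thesis unfolding Suc e IH by simp
    qed
  qed
qed

primrec lspan :: "'a::field set \<Rightarrow> ('a \<Rightarrow> 'v::ab_group_add \<Rightarrow> 'v) \<Rightarrow> 'v list \<Rightarrow> 'v set" where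
  "lspan S sc [] = {0}"
| "lspan S sc (x # xs) = {sc c x + y | c y. c \<in> S \<and> y \<in> lspan S sc xs}"

primrec lindep :: "'a::field set \<Rightarrow> ('a \<Rightarrow> 'v::ab_group_add \<Rightarrow> 'v) \<Rightarrow> 'v list \<Rightarrow> bool" where
  "lindep S sc [] = True"
| "lindep S sc (x # xs) = (x \<notin> lspan S sc xs \<and> lindep S sc xs)"

definition subsp :: "'a::field set \<Rightarrow> ('a \<Rightarrow> 'v::ab_group_add \<Rightarrow> 'v) \<Rightarrow> 'v set \<Rightarrow> bool" where
  "subsp S sc U \<longleftrightarrow> 0 \<in> U \<and> (\<forall>x\<in>U. \<forall>y\<in>U. x + y \<in> U) \<and> (\<forall>c\<in>S. \<forall>x\<in>U. sc c x \<in> U)"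

definition ilists :: "'a::field set \<Rightarrow> ('a \<Rightarrow> 'v::ab_group_add \<Rightarrow> 'v) \<Rightarrow> 'v set \<Rightarrow> nat \<Rightarrow> 'v list set" where
  "ilists S sc U t = {xs. length xs = t \<and> lindep S sc xs \<and> set xs \<subseteq> U}"

definition subs :: "'a::field set \<Rightarrow> ('a \<Rightarrow> 'v::ab_group_add \<Rightarrow> 'v) \<Rightarrow> 'v set \<Rightarrow> nat \<Rightarrow> 'v set set" where
  "subs S sc U s = {W. subsp S sc W \<and> W \<subseteq> U \<and> card W = card S ^ s}"

lemma subfield_facts:
  assumes "is_subfield S"
  shows "0 \<in> S" "1 \<in> S" "a \<in> S \<Longrightarrow> b \<in> S \<Longrightarrow> a + b \<in> S" "a \<in> S \<Longrightarrow> b \<in> S \<Longrightarrow> a * b \<in> S"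
    "a \<in> S \<Longrightarrow> - a \<in> S" "a \<in> S \<Longrightarrow> inverse a \<in> S" "a \<in> S \<Longrightarrow> b \<in> S \<Longrightarrow> a - b \<in> S"
  using assms unfolding is_subfield_def
  by (auto simp: inverse_eq_divide) (metis diff_conv_add_uminus)

lemma subfield_sum: "is_subfield S \<Longrightarrow> (\<And>i. i \<in> I \<Longrightarrow> f i \<in> S) \<Longrightarrow> sum f I \<in> S"
proof (induct I rule: infinite_finite_induct)
  case (infinite A) thus ?case using subfield_facts by simp
next
  case empty thus ?case using subfield_facts by simp
next
  case (insert x F)
  hence "f x \<in> S" "sum f F \<in> S" by auto
  thus ?case using subfield_facts(3)[OF insert.prems(1)] insert.hyps by simp
qed

lemma subfield_card: assumes "is_subfield (S :: 'a::{field,finite} set)" shows "card S \<ge> 2"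
proof -
  have "{0, 1} \<subseteq> S" using subfield_facts[OF assms] by auto
  hence "card {0::'a, 1} \<le> card S" by (intro card_mono) auto
  thus ?thesis by simp
qed

locale kmod =
  fixes S :: "'a::field set" and sc :: "'a \<Rightarrow> 'v::ab_group_add \<Rightarrow> 'v"
  assumes sf: "is_subfield S"
    and finS: "finite S"
    and sc_add: "sc a (x + y) = sc a x + sc a y"
    and sc_add2: "sc (a + b) x = sc a x + sc b x"
    and sc_mult: "sc (a * b) x = sc a (sc b x)"
    and sc_one: "sc 1 x = x"
begin

lemma sc_zero[simp]: "sc 0 x = 0"
  using sc_add2[of 0 0 x] by simp

lemma sc_zero2[simp]: "sc a 0 = 0"
  using sc_add[of a 0 0] by simp

lemma sc_minus: "sc (- a) x = - sc a x"
  using sc_add2[of "-a" a x] by (simp add: eq_neg_iff_add_eq_0)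

lemma sc_diff2: "sc (a - b) x = sc a x - sc b x"
  using sc_add2[of a "-b" x] sc_minus by simp

lemma sc_minus2: "sc a (- x) = - sc a x"
  using sc_add[of a "-x" x] by (simp add: eq_neg_iff_add_eq_0)

lemma sc_diff: "sc a (x - y) = sc a x - sc a y"
  using sc_add[of a x "-y"] sc_minus2 by simp

lemmas SF = subfield_facts[OF sf]

lemma subsp_diff: "subsp S sc U \<Longrightarrow> x \<in> U \<Longrightarrow> y \<in> U \<Longrightarrow> x - y \<in> U"
  unfolding subsp_def using SF(2,5) sc_minus[of 1 y]
  by (metis diff_conv_add_uminus sc_one)

lemma subsp_sc: "subsp S sc U \<Longrightarrow> c \<in> S \<Longrightarrow> x \<in> U \<Longrightarrow> sc c x \<in> U"
  unfolding subsp_def by blast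

lemma subsp_add: "subsp S sc U \<Longrightarrow> x \<in> U \<Longrightarrow> y \<in> U \<Longrightarrow> x + y \<in> U"
  unfolding subsp_def by blast

lemma subsp_0: "subsp S sc U \<Longrightarrow> 0 \<in> U"
  unfolding subsp_def by blast

lemma lspan_subsp: "subsp S sc (lspan S sc xs)"
proof (induct xs)
  case Nil thus ?case by (simp add: subsp_def)
next
  case (Cons x xs)
  show ?case unfolding subsp_def lspan.simps
  proof (intro conjI ballI)
    show "0 \<in> {sc c x + y |c y. c \<in> S \<and> y \<in> lspan S sc xs}"
      using SF(1) subsp_0[OF Cons] by (auto intro!: exI[of _ 0])
  next
    fix a b assume "a \<in> {sc c x + y |c y. c \<in> S \<and> y \<in> lspan S sc xs}" "b \<in> {sc c x + y |c y. c \<in> S \<and> y \<in> lspan S sc xs}"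
    then obtain c y c' y' where "a = sc c x + y" "c \<in> S" "y \<in> lspan S sc xs" "b = sc c' x + y'" "c' \<in> S" "y' \<in> lspan S sc xs"
      by auto
    moreover have "a + b = sc (c + c') x + (y + y')" using calculation by (simp add: sc_add2 algebra_simps)
    ultimately show "a + b \<in> {sc c x + y |c y. c \<in> S \<and> y \<in> lspan S sc xs}"
      using SF(3) subsp_add[OF Cons] by blast
  next
    fix d a assume "d \<in> S" "a \<in> {sc c x + y |c y. c \<in> S \<and> y \<in> lspan S sc xs}"
    then obtain c y where "a = sc c x + y" "c \<in> S" "y \<in> lspan S sc xs" by auto
    moreover have "sc d a = sc (d * c) x + sc d y" using calculation by (simp add: sc_add sc_mult)
    ultimately show "sc d a \<in> {sc c x + y |c y. c \<in> S \<and> y \<in> lspan S sc xs}"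
      using SF(4) subsp_sc[OF Cons] \<open>d \<in> S\<close> by blast
  qed
qed

lemma lspan_mono: "subsp S sc U \<Longrightarrow> set xs \<subseteq> U \<Longrightarrow> lspan S sc xs \<subseteq> U"
proof (induct xs)
  case Nil thus ?case by (simp add: subsp_0)
next
  case (Cons x xs) thus ?case by (auto intro!: subsp_add subsp_sc)
qed

lemma finite_lspan: "finite (lspan S sc xs)"
proof (induct xs)
  case Nil thus ?case by simp
next
  case (Cons x xs)
  have "lspan S sc (x # xs) = (\<lambda>(c, y). sc c x + y) ` (S \<times> lspan S sc xs)" by auto
  thus ?case using Cons finS by simp
qed

lemma card_lspan: "lindep S sc xs \<Longrightarrow> card (lspan S sc xs) = card S ^ length xs"
proof (induct xs)
  case Nil thus ?case by simp
next
  case (Cons x xs)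
  have e: "lspan S sc (x # xs) = (\<lambda>(c, y). sc c x + y) ` (S \<times> lspan S sc xs)" by auto
  have "inj_on (\<lambda>(c, y). sc c x + y) (S \<times> lspan S sc xs)"
  proof (rule inj_onI, clarify)
    fix c y c' y' assume h: "c \<in> S" "y \<in> lspan S sc xs" "c' \<in> S" "y' \<in> lspan S sc xs"
      "sc c x + y = sc c' x + y'"
    show "c = c' \<and> y = y'"
    proof (cases "c = c'")
      case True thus ?thesis using h by simp
    next
      case False
      have "sc (c - c') x = y' - y" using h(5) by (simp add: sc_diff2 algebra_simps)
      hence "sc (inverse (c - c')) (sc (c - c') x) = sc (inverse (c - c')) (y' - y)" by simp
      hence "x = sc (inverse (c - c')) (y' - y)" using False by (simp add: sc_mult[symmetric] sc_one)
      moreover have "sc (inverse (c - c')) (y' - y) \<in> lspan S sc xs"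
        using h SF(6,7) lspan_subsp by (intro subsp_sc subsp_diff) auto
      ultimately show ?thesis using Cons.prems by simp
    qed
  qed
  thus ?case unfolding e using Cons finS finite_lspan by (simp add: card_image card_cartesian_product)
qed

lemma in_lspan_Cons: "x \<in> lspan S sc (x # xs)"
proof -
  have "0 \<in> lspan S sc xs" by (rule subsp_0[OF lspan_subsp])
  moreover have "x = sc 1 x + 0" by (simp add: sc_one)
  ultimately show ?thesis using SF(2) by force
qed

lemma lspan_Cons_mono: "lspan S sc xs \<subseteq> lspan S sc (x # xs)"
proof
  fix y assume "y \<in> lspan S sc xs"
  moreover have "y = sc 0 x + y" by simp
  ultimately show "y \<in> lspan S sc (x # xs)" using SF(1) by force
qed

lemma set_lspan: "set xs \<subseteq> lspan S sc xs"
proof (induct xs)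
  case (Cons x xs) thus ?case using in_lspan_Cons[of x xs] lspan_Cons_mono[of xs x] by auto
qed simp

lemma finite_ilists: "finite U \<Longrightarrow> finite (ilists S sc U t)"
  unfolding ilists_def
  by (rule finite_subset[OF _ finite_lists_length_eq[of U t]]) auto

lemma card_ilists:
  assumes "subsp S sc U" "finite U"
  shows "real (card (ilists S sc U t)) = (\<Prod>k<t. real (card U) - real (card S) ^ k)"
proof (induct t)
  case 0
  have "ilists S sc U 0 = {[]}" by (auto simp: ilists_def)
  thus ?case by simp
next
  case (Suc t)
  have e: "ilists S sc U (Suc t) = (\<lambda>(xs, x). x # xs) ` (SIGMA xs: ilists S sc U t. U - lspan S sc xs)"
  proof (intro equalityI subsetI)
    fix ys assume "ys \<in> ilists S sc U (Suc t)"
    then obtain x xs where "ys = x # xs" "length xs = t" "lindep S sc xs" "x \<notin> lspan S sc xs" "set xs \<subseteq> U" "x \<in> U"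
      unfolding ilists_def by (cases ys) auto
    thus "ys \<in> (\<lambda>(xs, x). x # xs) ` (SIGMA xs: ilists S sc U t. U - lspan S sc xs)"
      unfolding ilists_def by (auto intro!: image_eqI[of _ _ "(xs, x)"])
  qed (auto simp: ilists_def)
  have inj: "inj_on (\<lambda>(xs, x). x # xs) (SIGMA xs: ilists S sc U t. U - lspan S sc xs)"
    by (auto intro!: inj_onI)
  have cd: "real (card (U - lspan S sc xs)) = real (card U) - real (card S) ^ t" if "xs \<in> ilists S sc U t" for xs
  proof -
    have "lspan S sc xs \<subseteq> U" using that assms by (intro lspan_mono) (auto simp: ilists_def)
    hence "card (U - lspan S sc xs) = card U - card (lspan S sc xs)" using assms by (simp add: card_Diff_subset finite_lspan)
    moreover have "card (lspan S sc xs) \<le> card U" using \<open>lspan S sc xs \<subseteq> U\<close> assms by (simp add: card_mono)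
    moreover have "card (lspan S sc xs) = card S ^ t" using that card_lspan by (auto simp: ilists_def)
    ultimately show ?thesis by (simp add: of_nat_diff)
  qed
  have "real (card (ilists S sc U (Suc t))) = (\<Sum>xs\<in>ilists S sc U t. real (card (U - lspan S sc xs)))"
    unfolding e using inj assms finite_ilists by (simp add: card_image)
  also have "\<dots> = real (card (ilists S sc U t)) * (real (card U) - real (card S) ^ t)"
    using cd by simp
  finally show ?case using Suc by simp
qed

lemma q_ge2_loc: "card S \<ge> 2"
proof -
  have "{0, 1} \<subseteq> S" using SF by auto
  hence "card {0::'a, 1} \<le> card S" using finS by (intro card_mono) auto
  thus ?thesis by simp
qed

lemma basis_exists:
  assumes "subsp S sc U" "finite U"
  shows "\<exists>xs. lindep S sc xs \<and> set xs \<subseteq> U \<and> lspan S sc xs = U"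
proof -
  define L where "L = {length xs | xs. lindep S sc xs \<and> set xs \<subseteq> U}"
  have bnd: "l \<le> card U" if "l \<in> L" for l
  proof -
    obtain xs where xs: "l = length xs" "lindep S sc xs" "set xs \<subseteq> U" using \<open>l \<in> L\<close> by (auto simp: L_def)
    have "card (lspan S sc xs) \<le> card U" using xs assms lspan_mono by (intro card_mono) auto
    hence "card S ^ l \<le> card U" using xs card_lspan by simp
    moreover have "l < card S ^ l" using q_ge2_loc by (intro less_exp[THEN less_le_trans] power_mono) auto
    ultimately show ?thesis by simp
  qed
  have "finite L" using bnd by (meson finite_nat_set_iff_bounded_le)
  moreover have "0 \<in> L" by (auto simp: L_def intro!: exI[of _ "[]"])
  ultimately have "Max L \<in> L" by (intro Max_in) auto
  then obtain xs where xs: "Max L = length xs" "lindep S sc xs" "set xs \<subseteq> U" by (auto simp: L_def)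
  have "lspan S sc xs = U"
  proof (rule ccontr)
    assume "lspan S sc xs \<noteq> U"
    moreover have "lspan S sc xs \<subseteq> U" using xs assms lspan_mono by auto
    ultimately obtain x where "x \<in> U" "x \<notin> lspan S sc xs" by auto
    hence "length (x # xs) \<in> L" using xs by (auto simp: L_def intro!: exI[of _ "x # xs"])
    hence "length (x # xs) \<le> Max L" using \<open>finite L\<close> by simp
    thus False using xs by simp
  qed
  thus ?thesis using xs by blast
qed

lemma subsp_card_pow:
  assumes "subsp S sc U" "finite U"
  shows "\<exists>d. card U = card S ^ d"
  using basis_exists[OF assms] card_lspan by metis

lemma ilists_span:
  assumes "xs \<in> ilists S sc W t" "subsp S sc W" "finite W" "card W = card S ^ t"
  shows "lspan S sc xs = W"
proof -
  have "lspan S sc xs \<subseteq> W" using assms lspan_mono by (auto simp: ilists_def)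
  moreover have "card (lspan S sc xs) = card W" using assms card_lspan by (auto simp: ilists_def)
  ultimately show ?thesis using assms(3) by (simp add: card_subset_eq)
qed

lemma count_subs:
  assumes "subsp S sc U" "finite U" "card U = card S ^ d"
  shows "real (card (subs S sc U s)) * gam (card S) s s = gam (card S) d s"
proof -
  have fs: "finite (subs S sc U s)"
    by (rule finite_subset[of _ "Pow U"]) (auto simp: subs_def assms)
  have e: "ilists S sc U s = (\<Union>W\<in>subs S sc U s. ilists S sc W s)"
  proof (intro equalityI subsetI)
    fix xs assume xs: "xs \<in> ilists S sc U s"
    have "lspan S sc xs \<in> subs S sc U s"
      using xs assms lspan_subsp lspan_mono card_lspan by (auto simp: subs_def ilists_def)
    moreover have "xs \<in> ilists S sc (lspan S sc xs) s" using xs set_lspan by (auto simp: ilists_def)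
    ultimately show "xs \<in> (\<Union>W\<in>subs S sc U s. ilists S sc W s)" by blast
  qed (auto simp: ilists_def subs_def)
  have disj: "\<forall>W\<in>subs S sc U s. \<forall>W'\<in>subs S sc U s. W \<noteq> W' \<longrightarrow> ilists S sc W s \<inter> ilists S sc W' s = {}"
  proof (intro ballI impI)
    fix W W' assume h: "W \<in> subs S sc U s" "W' \<in> subs S sc U s" "W \<noteq> W'"
    have fW: "finite W" "finite W'" using h assms(2) by (auto simp: subs_def intro: finite_subset)
    show "ilists S sc W s \<inter> ilists S sc W' s = {}"
    proof (rule ccontr)
      assume "ilists S sc W s \<inter> ilists S sc W' s \<noteq> {}"
      then obtain xs where x1: "xs \<in> ilists S sc W s" and x2: "xs \<in> ilists S sc W' s" by auto
      have "lspan S sc xs = W" using h fW by (intro ilists_span[OF x1]) (auto simp: subs_def)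
      moreover have "lspan S sc xs = W'" using h fW by (intro ilists_span[OF x2]) (auto simp: subs_def)
      ultimately show False using h by simp
    qed
  qed
  have cW: "real (card (ilists S sc W s)) = gam (card S) s s" if "W \<in> subs S sc U s" for W
  proof -
    have "finite W" using that assms(2) by (auto simp: subs_def intro: finite_subset)
    thus ?thesis using that card_ilists[of W s] by (simp add: subs_def gam_def)
  qed
  have "real (card (ilists S sc U s)) = (\<Sum>W\<in>subs S sc U s. real (card (ilists S sc W s)))"
    unfolding e using fs disj finite_ilists assms(2)
    by (subst card_UN_disjoint) (auto simp: subs_def intro: finite_subset finite_ilists)
  also have "\<dots> = real (card (subs S sc U s)) * gam (card S) s s" using cW by simp
  finally show ?thesis using card_ilists[OF assms(1,2), of s] assms(3) by (simp add: gam_def)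
qed

end

definition Sv :: "'a::field set \<Rightarrow> nat \<Rightarrow> (nat \<Rightarrow> 'a) set" where
  "Sv S n = {v. (\<forall>i. v i \<in> S) \<and> (\<forall>i\<ge>n. v i = 0)}"

definition vsc :: "'a::field \<Rightarrow> (nat \<Rightarrow> 'a) \<Rightarrow> nat \<Rightarrow> 'a" where
  "vsc c v = (\<lambda>i. c * v i)"

definition dotp :: "nat \<Rightarrow> (nat \<Rightarrow> 'a::field) \<Rightarrow> (nat \<Rightarrow> 'a) \<Rightarrow> 'a" where
  "dotp n u v = (\<Sum>i<n. u i * v i)"

definition orth :: "'a::field set \<Rightarrow> nat \<Rightarrow> (nat \<Rightarrow> 'a) set \<Rightarrow> (nat \<Rightarrow> 'a) set" where
  "orth S n X = {v \<in> Sv S n. \<forall>u\<in>X. dotp n u v = 0}"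

lemma dotp_add: "dotp n (x + y) u = dotp n x u + dotp n y u"
  by (simp add: dotp_def sum.distrib algebra_simps)
lemma dotp_diff: "dotp n (x - y) u = dotp n x u - dotp n y u"
  by (simp add: dotp_def sum_subtractf algebra_simps)
lemma dotp_sc: "dotp n (vsc c x) u = c * dotp n x u"
  by (simp add: dotp_def vsc_def sum_distrib_left algebra_simps)
lemma dotp_zero[simp]: "dotp n u 0 = 0" "dotp n 0 u = 0"
  by (simp_all add: dotp_def)
lemma dotp_comm: "dotp n u v = dotp n v u"
  by (simp add: dotp_def mult.commute)

lemma sum_if_const:
  fixes a b :: real
  assumes "finite A"
  shows "(\<Sum>x\<in>A. if P x then a else b) = real (card {x\<in>A. P x}) * a + (real (card A) - real (card {x\<in>A. P x})) * b"
proof -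
  have "(\<Sum>x\<in>A. if P x then a else b) = (\<Sum>x\<in>{x\<in>A. P x}. a) + (\<Sum>x\<in>{x\<in>A. \<not> P x}. b)"
    using assms by (simp add: sum.If_cases Int_def)
  moreover have "card {x\<in>A. \<not> P x} = card A - card {x\<in>A. P x}"
  proof -
    have "{x\<in>A. \<not> P x} = A - {x\<in>A. P x}" by auto
    thus ?thesis using assms by (simp add: card_Diff_subset)
  qed
  moreover have "card {x\<in>A. P x} \<le> card A" using assms by (intro card_mono) auto
  ultimately show ?thesis by (simp add: of_nat_diff)
qed

lemma card_filter_sum: "finite A \<Longrightarrow> real (card {x\<in>A. P x}) = (\<Sum>x\<in>A. if P x then 1 else 0)"
  using sum_if_const[of A P 1 0] by simp

locale vecsp =
  fixes S :: "'a::field set" and n :: nat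
  assumes sf0: "is_subfield S" and finS0: "finite S"
begin

sublocale kmod S vsc
  by unfold_locales (auto simp: sf0 finS0 vsc_def fun_eq_iff algebra_simps)

abbreviation "q \<equiv> card S"

lemma Sv_subsp: "subsp S vsc (Sv S n)"
  unfolding subsp_def Sv_def vsc_def using SF by (auto simp: plus_fun_def)

lemma card_Sv: "card (Sv S n) = q ^ n" and finite_Sv: "finite (Sv S n)"
proof -
  have b: "bij_betw (\<lambda>v. restrict v {..<n}) (Sv S n) (PiE {..<n} (\<lambda>_. S))"
  proof (rule bij_betwI[where g = "\<lambda>g i. if i < n then g i else 0"])
    show "(\<lambda>v. restrict v {..<n}) \<in> Sv S n \<rightarrow> PiE {..<n} (\<lambda>_. S)" by (auto simp: Sv_def)
    show "(\<lambda>g i. if i < n then g i else 0) \<in> PiE {..<n} (\<lambda>_. S) \<rightarrow> Sv S n"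
      using SF(1) by (auto simp: Sv_def PiE_def Pi_def)
    show "(\<lambda>i. if i < n then restrict v {..<n} i else 0) = v" if "v \<in> Sv S n" for v
      using that by (auto simp: Sv_def fun_eq_iff)
    show "restrict (\<lambda>i. if i < n then g i else 0) {..<n} = g" if "g \<in> PiE {..<n} (\<lambda>_. S)" for g
      using that by (auto simp: fun_eq_iff PiE_def extensional_def)
  qed
  show "card (Sv S n) = q ^ n" using bij_betw_same_card[OF b] by (simp add: card_PiE)
  show "finite (Sv S n)" using bij_betw_finite[OF b] finS0 by (simp add: finite_PiE)
qed

lemma dotp_in: "u \<in> Sv S n \<Longrightarrow> v \<in> Sv S n \<Longrightarrow> dotp n u v \<in> S"
  unfolding dotp_def Sv_def by (intro subfield_sum[OF sf0] SF(4)) auto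

lemma orth_subsp: "subsp S vsc (orth S n X)"
  using Sv_subsp unfolding subsp_def orth_def
  by (auto simp: dotp_comm[of n _ "_ + _"] dotp_comm[of n _ "vsc _ _"] dotp_add dotp_sc)
     (auto simp: dotp_comm)

lemma orth_sub: "orth S n X \<subseteq> Sv S n" by (auto simp: orth_def)

lemma zero_count:
  assumes C: "subsp S vsc C" "C \<subseteq> Sv S n" and u: "u \<in> Sv S n"
  shows "real (card {x\<in>C. dotp n x u = 0}) =
    (if (\<forall>x\<in>C. dotp n x u = 0) then real (card C) else real (card C) / real q)"
proof (cases "\<forall>x\<in>C. dotp n x u = 0")
  case True
  hence "{x\<in>C. dotp n x u = 0} = C" by auto
  thus ?thesis using True by simp
next
  case False
  then obtain x0 where x0: "x0 \<in> C" "dotp n x0 u \<noteq> 0" by auto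
  define d where "d = dotp n x0 u"
  have dS: "d \<in> S" using x0 C u dotp_in by (auto simp: d_def)
  define x1 where "x1 = vsc (inverse d) x0"
  have x1C: "x1 \<in> C" unfolding x1_def using C(1) x0 dS SF(6) by (intro subsp_sc) auto
  have x1u: "dotp n x1 u = 1" using x0 by (simp add: x1_def dotp_sc d_def)
  define Z where "Z = {x\<in>C. dotp n x u = 0}"
  have b: "bij_betw (\<lambda>(z, c). z + vsc c x1) (Z \<times> S) C"
  proof (rule bij_betwI[where g = "\<lambda>x. (x - vsc (dotp n x u) x1, dotp n x u)"])
    show "(\<lambda>(z, c). z + vsc c x1) \<in> Z \<times> S \<rightarrow> C"
      using C(1) x1C by (auto simp: Z_def intro!: subsp_add subsp_sc)
    show "(\<lambda>x. (x - vsc (dotp n x u) x1, dotp n x u)) \<in> C \<rightarrow> Z \<times> S"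
    proof
      fix x assume x: "x \<in> C"
      have dx: "dotp n x u \<in> S" using x C u dotp_in by auto
      have "x - vsc (dotp n x u) x1 \<in> C" using C(1) x x1C dx by (intro subsp_diff subsp_sc) auto
      moreover have "dotp n (x - vsc (dotp n x u) x1) u = 0" by (simp add: dotp_diff dotp_sc x1u)
      ultimately show "(\<lambda>x. (x - vsc (dotp n x u) x1, dotp n x u)) x \<in> Z \<times> S" using dx by (simp add: Z_def)
    qed
    show "(\<lambda>(z, c). z + vsc c x1) (x - vsc (dotp n x u) x1, dotp n x u) = x" if "x \<in> C" for x
      by simp
    show "(\<lambda>x. (x - vsc (dotp n x u) x1, dotp n x u)) ((\<lambda>(z, c). z + vsc c x1) zc) = zc" if "zc \<in> Z \<times> S" for zc
      using that by (auto simp: Z_def dotp_add dotp_sc x1u)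
  qed
  have fC: "finite C" using C(2) finite_Sv finite_subset by auto
  have "card C = card Z * q" using bij_betw_same_card[OF b] by (simp add: card_cartesian_product)
  moreover have "q > 0" using q_ge2_loc by simp
  ultimately have "real (card Z) = real (card C) / real q" by (simp add: field_simps)
  thus ?thesis by (simp add: Z_def if_not_P[OF False])
qed

lemma counting:
  assumes C: "subsp S vsc C" "C \<subseteq> Sv S n" and D: "subsp S vsc D" "D \<subseteq> Sv S n"
  shows "card C * card (D \<inter> orth S n C) = card D * card (C \<inter> orth S n D)"
proof -
  have fC: "finite C" using C(2) finite_Sv finite_subset by auto
  have fD: "finite D" using D(2) finite_Sv finite_subset by auto
  have "(\<Sum>u\<in>D. real (card {x\<in>C. dotp n x u = 0})) = (\<Sum>u\<in>D. \<Sum>x\<in>C. if dotp n x u = 0 then 1 else 0)"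
    using fC by (simp add: card_filter_sum)
  also have "\<dots> = (\<Sum>x\<in>C. \<Sum>u\<in>D. if dotp n u x = 0 then 1 else 0)"
    by (subst sum.swap) (simp add: dotp_comm)
  also have "\<dots> = (\<Sum>x\<in>C. real (card {u\<in>D. dotp n u x = 0}))"
    using fD by (simp add: card_filter_sum)
  finally have e: "(\<Sum>u\<in>D. real (card {x\<in>C. dotp n x u = 0})) = (\<Sum>x\<in>C. real (card {u\<in>D. dotp n u x = 0}))" .
  have l: "(\<Sum>u\<in>D. real (card {x\<in>C. dotp n x u = 0})) =
     real (card (D \<inter> orth S n C)) * real (card C) + (real (card D) - real (card (D \<inter> orth S n C))) * (real (card C) / real q)"
  proof -
    have "(\<Sum>u\<in>D. real (card {x\<in>C. dotp n x u = 0})) = (\<Sum>u\<in>D. if (\<forall>x\<in>C. dotp n x u = 0) then real (card C) else real (card C) / real q)"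
      using D(2) by (intro sum.cong refl zero_count[OF C]) auto
    also have "{u\<in>D. \<forall>x\<in>C. dotp n x u = 0} = D \<inter> orth S n C" using D(2) by (auto simp: orth_def)
    hence "(\<Sum>u\<in>D. if (\<forall>x\<in>C. dotp n x u = 0) then real (card C) else real (card C) / real q) =
       real (card (D \<inter> orth S n C)) * real (card C) + (real (card D) - real (card (D \<inter> orth S n C))) * (real (card C) / real q)"
      using sum_if_const[OF fD] by simp
    finally show ?thesis .
  qed
  have r: "(\<Sum>x\<in>C. real (card {u\<in>D. dotp n u x = 0})) =
     real (card (C \<inter> orth S n D)) * real (card D) + (real (card C) - real (card (C \<inter> orth S n D))) * (real (card D) / real q)"
  proof -
    have "(\<Sum>x\<in>C. real (card {u\<in>D. dotp n u x = 0})) = (\<Sum>x\<in>C. if (\<forall>u\<in>D. dotp n u x = 0) then real (card D) else real (card D) / real q)"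
      using C(2) by (intro sum.cong refl zero_count[OF D]) auto
    also have "{x\<in>C. \<forall>u\<in>D. dotp n u x = 0} = C \<inter> orth S n D" using C(2) by (auto simp: orth_def)
    hence "(\<Sum>x\<in>C. if (\<forall>u\<in>D. dotp n u x = 0) then real (card D) else real (card D) / real q) =
       real (card (C \<inter> orth S n D)) * real (card D) + (real (card C) - real (card (C \<inter> orth S n D))) * (real (card D) / real q)"
      using sum_if_const[OF fC] by simp
    finally show ?thesis .
  qed
  have q2: "real q \<ge> 2" using q_ge2_loc by simp
  have "real (card (D \<inter> orth S n C)) * real (card C) * (1 - 1 / real q) = real (card (C \<inter> orth S n D)) * real (card D) * (1 - 1 / real q)"
    using e l r q2 by (simp add: field_simps)
  moreover have "1 - 1 / real q \<noteq> 0" using q2 by simp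
  ultimately have "real (card (D \<inter> orth S n C)) * real (card C) = real (card (C \<inter> orth S n D)) * real (card D)"
    by (metis mult_right_cancel)
  hence "real (card C * card (D \<inter> orth S n C)) = real (card D * card (C \<inter> orth S n D))"
    by (simp add: mult.commute)
  thus ?thesis by (simp only: of_nat_eq_iff)
qed

definition ev :: "nat \<Rightarrow> nat \<Rightarrow> 'a" where "ev i = (\<lambda>j. if j = i then 1 else 0)"

lemma orth_Sv_zero: "v \<in> orth S n (Sv S n) \<Longrightarrow> v = 0"
proof -
  assume v: "v \<in> orth S n (Sv S n)"
  have "v i = 0" for i
  proof (cases "i < n")
    case True
    have "ev i \<in> Sv S n" using SF(1,2) True by (auto simp: ev_def Sv_def)
    hence "dotp n (ev i) v = 0" using v by (auto simp: orth_def)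
    moreover have "dotp n (ev i) v = v i"
    proof -
      have "dotp n (ev i) v = (\<Sum>j<n. if j = i then v j else 0)"
        unfolding dotp_def by (intro sum.cong) (auto simp: ev_def)
      thus ?thesis using True by (simp add: sum.delta)
    qed
    ultimately show ?thesis by simp
  next
    case False thus ?thesis using v by (auto simp: orth_def Sv_def)
  qed
  thus "v = 0" by (simp add: fun_eq_iff)
qed

lemma card_orth:
  assumes X: "subsp S vsc X" "X \<subseteq> Sv S n"
  shows "card X * card (orth S n X) = q ^ n"
proof -
  have "card (Sv S n) * card (X \<inter> orth S n (Sv S n)) = card X * card (Sv S n \<inter> orth S n X)"
    by (rule counting[OF Sv_subsp _ X]) simp
  moreover have "X \<inter> orth S n (Sv S n) = {0}" using orth_Sv_zero subsp_0[OF X(1)] subsp_0[OF orth_subsp]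
    by auto
  moreover have "Sv S n \<inter> orth S n X = orth S n X" using orth_sub by auto
  ultimately show ?thesis by (simp add: card_Sv)
qed

lemma orth_orth:
  assumes X: "subsp S vsc X" "X \<subseteq> Sv S n"
  shows "orth S n (orth S n X) = X"
proof -
  have sub: "X \<subseteq> orth S n (orth S n X)" using X(2) by (auto simp: orth_def dotp_comm)
  have "card (orth S n X) * card (orth S n (orth S n X)) = q ^ n"
    by (rule card_orth[OF orth_subsp orth_sub])
  moreover have "card X * card (orth S n X) = q ^ n" by (rule card_orth[OF X])
  moreover have "card (orth S n X) > 0"
    using subsp_0[OF orth_subsp] finite_subset[OF orth_sub finite_Sv] by (auto simp: card_gt_0_iff)
  ultimately have "card (orth S n (orth S n X)) = card X" by (metis mult.commute mult_left_cancel neq0_conv)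
  moreover have "finite (orth S n (orth S n X))" using finite_subset[OF orth_sub finite_Sv] .
  ultimately show ?thesis using sub by (metis card_subset_eq)
qed

end

lemma card_fibres: "finite A \<Longrightarrow> card A = (\<Sum>y\<in>f ` A. card {x\<in>A. f x = y})"
  using sum.group[of A "f ` A" f "\<lambda>_. 1::nat"] by simp

context
  fixes K :: "'a::{field,finite} set" and n :: nat and v :: "nat \<Rightarrow> 'a"
  assumes sfK: "is_subfield K"
begin

interpretation KV: vecsp K n
  by unfold_locales (auto simp: sfK)

definition kerv :: "(nat \<Rightarrow> 'a) set" where
  "kerv = {w \<in> Sv K n. dotp n w v = 0}"

definition spanI :: "nat set \<Rightarrow> 'a set" where
  "spanI I = {(\<Sum>i\<in>I. c i * v i) | c. \<forall>i\<in>I. c i \<in> K}"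

lemma spanI_intro: "(\<forall>i\<in>I. c i \<in> K) \<Longrightarrow> x = (\<Sum>i\<in>I. c i * v i) \<Longrightarrow> x \<in> spanI I"
  unfolding spanI_def by blast

lemma spanI_add: "x \<in> spanI I \<Longrightarrow> y \<in> spanI I \<Longrightarrow> x + y \<in> spanI I"
proof -
  assume "x \<in> spanI I" "y \<in> spanI I"
  then obtain c d where "x = (\<Sum>i\<in>I. c i * v i)" "\<forall>i\<in>I. c i \<in> K" "y = (\<Sum>i\<in>I. d i * v i)" "\<forall>i\<in>I. d i \<in> K"
    by (auto simp: spanI_def)
  moreover have "x + y = (\<Sum>i\<in>I. (c i + d i) * v i)" using calculation by (simp add: sum.distrib algebra_simps)
  ultimately show ?thesis using KV.SF(3) by (intro spanI_intro[of _ "\<lambda>i. c i + d i"]) auto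
qed

lemma spanI_sc: "a \<in> K \<Longrightarrow> x \<in> spanI I \<Longrightarrow> a * x \<in> spanI I"
proof -
  assume a: "a \<in> K" "x \<in> spanI I"
  then obtain c where "x = (\<Sum>i\<in>I. c i * v i)" "\<forall>i\<in>I. c i \<in> K" by (auto simp: spanI_def)
  moreover have "a * x = (\<Sum>i\<in>I. (a * c i) * v i)" using calculation by (simp add: sum_distrib_left algebra_simps)
  ultimately show ?thesis using KV.SF(4) a by (intro spanI_intro[of _ "\<lambda>i. a * c i"]) auto
qed

lemma spanI_0: "0 \<in> spanI I"
  using KV.SF(1) by (intro spanI_intro[of _ "\<lambda>_. 0"]) auto

lemma spanI_sum: "(\<And>j. j \<in> J \<Longrightarrow> w j \<in> K) \<Longrightarrow> (\<And>j. j \<in> J \<Longrightarrow> v j \<in> spanI I) \<Longrightarrow> (\<Sum>j\<in>J. w j * v j) \<in> spanI I"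
proof (induct J rule: infinite_finite_induct)
  case (infinite A) thus ?case using spanI_0 by simp
next
  case empty thus ?case using spanI_0 by simp
next
  case (insert x F) thus ?case by (simp add: spanI_add spanI_sc)
qed

lemma card_spanI: assumes "lin_indep_over K v I" "finite I" shows "card (spanI I) = card K ^ card I"
proof -
  have b: "bij_betw (\<lambda>c. \<Sum>i\<in>I. c i * v i) (PiE I (\<lambda>_. K)) (spanI I)"
  proof (rule bij_betw_imageI)
    show "inj_on (\<lambda>c. \<Sum>i\<in>I. c i * v i) (PiE I (\<lambda>_. K))"
    proof (rule inj_onI)
      fix c d assume c: "c \<in> PiE I (\<lambda>_. K)" and d: "d \<in> PiE I (\<lambda>_. K)"
        and e: "(\<Sum>i\<in>I. c i * v i) = (\<Sum>i\<in>I. d i * v i)"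
      have "(\<Sum>i\<in>I. (c i - d i) * v i) = 0" using e by (simp add: sum_subtractf algebra_simps)
      moreover have "\<forall>i\<in>I. c i - d i \<in> K" using c d KV.SF(7) by auto
      ultimately have "\<forall>i\<in>I. c i - d i = 0"
        using assms(1)[unfolded lin_indep_over_def, rule_format, of "\<lambda>i. c i - d i"] by blast
      thus "c = d" using c d by (auto simp: PiE_def extensional_def fun_eq_iff)
    qed
    show "(\<lambda>c. \<Sum>i\<in>I. c i * v i) ` PiE I (\<lambda>_. K) = spanI I"
    proof (intro equalityI subsetI)
      fix x assume "x \<in> spanI I"
      then obtain c where c: "x = (\<Sum>i\<in>I. c i * v i)" "\<forall>i\<in>I. c i \<in> K" by (auto simp: spanI_def)
      hence "restrict c I \<in> PiE I (\<lambda>_. K)" by auto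
      moreover have "x = (\<Sum>i\<in>I. restrict c I i * v i)" using c by simp
      ultimately show "x \<in> (\<lambda>c. \<Sum>i\<in>I. c i * v i) ` PiE I (\<lambda>_. K)" by blast
    qed (auto simp: spanI_def PiE_def Pi_def)
  qed
  show ?thesis using bij_betw_same_card[OF b] assms(2) by (simp add: card_PiE)
qed

definition RS :: "nat set" where "RS = {card I | I. I \<subseteq> {..<n} \<and> lin_indep_over K v I}"

lemma RS_fin: "finite RS"
proof -
  have "RS \<subseteq> {..n}" unfolding RS_def using card_mono[of "{..<n}"] by fastforce
  thus ?thesis using finite_subset by blast
qed

lemma RS_ne: "0 \<in> RS" unfolding RS_def lin_indep_over_def by (auto intro!: exI[of _ "{}"])

lemma rkM: "rk K n v = Max RS" unfolding rk_def RS_def by (rule refl)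

lemma MR: "Max RS \<in> RS" using RS_fin RS_ne by (intro Max_in) auto

lemma rk_le: "rk K n v \<le> n"
proof -
  have "\<forall>r\<in>RS. r \<le> n" unfolding RS_def using card_mono[of "{..<n}"] by fastforce
  thus ?thesis using MR unfolding rkM by blast
qed

lemma card_kerv: assumes "v \<in> vecs n" shows "card kerv = card K ^ (n - rk K n v)"
proof -
  have "rk K n v \<in> RS" using MR unfolding rkM .
  then obtain I where I: "card I = rk K n v" "I \<subseteq> {..<n}" "lin_indep_over K v I" by (auto simp: RS_def)
  have fI: "finite I" using I(2) finite_subset by blast
  have vj: "v j \<in> spanI I" if "j < n" for j
  proof (cases "j \<in> I")
    case True
    have "(\<Sum>i\<in>I. (if i = j then 1 else 0) * v i) = (\<Sum>i\<in>I. if i = j then v i else 0)"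
      by (intro sum.cong) auto
    also have "\<dots> = v j" using True fI by simp
    finally have "v j = (\<Sum>i\<in>I. (if i = j then 1 else 0) * v i)" by simp
    moreover have "\<forall>i\<in>I. (if i = j then 1 else 0) \<in> K" using KV.SF(1,2) by auto
    ultimately show ?thesis by (intro spanI_intro[of _ "\<lambda>i. if i = j then 1 else 0"])
  next
    case False
    have "card (insert j I) \<notin> RS"
    proof
      assume "card (insert j I) \<in> RS"
      hence "card (insert j I) \<le> Max RS" using RS_fin by simp
      thus False using I(1) False fI unfolding rkM[symmetric] by simp
    qed
    moreover have "insert j I \<subseteq> {..<n}" using I(2) that by auto
    ultimately have "\<not> lin_indep_over K v (insert j I)" unfolding RS_def by blast
    then obtain c where c: "\<forall>i\<in>insert j I. c i \<in> K" "(\<Sum>i\<in>insert j I. c i * v i) = 0" "\<exists>i\<in>insert j I. c i \<noteq> 0"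
      unfolding lin_indep_over_def by blast
    have s: "c j * v j + (\<Sum>i\<in>I. c i * v i) = 0" using c(2) False fI by simp
    have cj: "c j \<noteq> 0"
    proof
      assume "c j = 0"
      hence "(\<Sum>i\<in>I. c i * v i) = 0" using s by simp
      hence "\<forall>i\<in>I. c i = 0" using I(3) c(1) unfolding lin_indep_over_def by blast
      thus False using c(3) \<open>c j = 0\<close> by auto
    qed
    have T: "(\<Sum>i\<in>I. c i * v i) = - (c j * v j)" using s by (simp add: eq_neg_iff_add_eq_0 add.commute)
    have "(\<Sum>i\<in>I. (- c i / c j) * v i) = (- 1 / c j) * (\<Sum>i\<in>I. c i * v i)"
      by (simp add: sum_distrib_left)
    also have "\<dots> = v j" unfolding T using cj by simp
    finally have "v j = (\<Sum>i\<in>I. (- c i / c j) * v i)" by simp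
    moreover have "\<forall>i\<in>I. - c i / c j \<in> K" using c(1) KV.SF(4,5,6) by (auto simp: divide_inverse)
    ultimately show ?thesis by (intro spanI_intro[of _ "\<lambda>i. - c i / c j"])
  qed
  define phi where "phi = (\<lambda>w. dotp n w v)"
  have im: "phi ` Sv K n = spanI I"
  proof (intro equalityI subsetI)
    fix x assume "x \<in> phi ` Sv K n"
    then obtain w where w: "w \<in> Sv K n" "x = dotp n w v" by (auto simp: phi_def)
    show "x \<in> spanI I" unfolding w dotp_def using w vj by (intro spanI_sum) (auto simp: Sv_def)
  next
    fix x assume "x \<in> spanI I"
    then obtain c where c: "x = (\<Sum>i\<in>I. c i * v i)" "\<forall>i\<in>I. c i \<in> K" by (auto simp: spanI_def)
    define w where "w = (\<lambda>i. if i \<in> I then c i else 0)"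
    have "w \<in> Sv K n" using c(2) I(2) KV.SF(1) by (auto simp: w_def Sv_def)
    moreover have "dotp n w v = x"
    proof -
      have "dotp n w v = (\<Sum>i\<in>{..<n}. if i \<in> I then c i * v i else 0)"
        unfolding dotp_def w_def by (intro sum.cong) auto
      also have "\<dots> = (\<Sum>i\<in>{..<n} \<inter> I. c i * v i)" by (simp add: sum.If_cases)
      also have "{..<n} \<inter> I = I" using I(2) by auto
      finally show ?thesis using c by simp
    qed
    ultimately show "x \<in> phi ` Sv K n" by (auto simp: phi_def)
  qed
  have fib: "card {w\<in>Sv K n. phi w = y} = card kerv" if "y \<in> phi ` Sv K n" for y
  proof -
    obtain w0 where w0: "w0 \<in> Sv K n" "phi w0 = y" using \<open>y \<in> phi ` Sv K n\<close> by auto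
    have "bij_betw (\<lambda>k. w0 + k) kerv {w\<in>Sv K n. phi w = y}"
    proof (rule bij_betw_imageI)
      show "inj_on (\<lambda>k. w0 + k) kerv" by (rule inj_onI) simp
      show "(\<lambda>k. w0 + k) ` kerv = {w\<in>Sv K n. phi w = y}"
      proof (intro equalityI subsetI)
        fix w assume "w \<in> (\<lambda>k. w0 + k) ` kerv"
        then obtain k where k: "k \<in> kerv" "w = w0 + k" by auto
        have "w \<in> Sv K n" unfolding k(2) using k(1) w0(1) by (intro KV.subsp_add[OF KV.Sv_subsp]) (auto simp: kerv_def)
        moreover have "phi w = y" using k w0(2) by (simp add: kerv_def phi_def dotp_add)
        ultimately show "w \<in> {w\<in>Sv K n. phi w = y}" by simp
      next
        fix w assume w: "w \<in> {w\<in>Sv K n. phi w = y}"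
        have "w - w0 \<in> Sv K n" using w w0(1) by (intro KV.subsp_diff[OF KV.Sv_subsp]) auto
        moreover have "dotp n (w - w0) v = 0" using w w0(2) by (simp add: phi_def dotp_diff)
        ultimately have "w - w0 \<in> kerv" by (simp add: kerv_def)
        moreover have "w = w0 + (w - w0)" by simp
        ultimately show "w \<in> (\<lambda>k. w0 + k) ` kerv" by blast
      qed
    qed
    from bij_betw_same_card[OF this] show ?thesis by simp
  qed
  have "card (Sv K n) = (\<Sum>y\<in>phi ` Sv K n. card {w\<in>Sv K n. phi w = y})"
    by (rule card_fibres[OF KV.finite_Sv])
  also have "\<dots> = card (spanI I) * card kerv" using fib im by simp
  finally have A: "card K ^ n = card K ^ rk K n v * card kerv"
    using card_spanI[OF I(3) fI] I(1) KV.card_Sv by simp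
  have B: "card K ^ n = card K ^ rk K n v * card K ^ (n - rk K n v)"
    using rk_le by (simp add: power_add[symmetric])
  have "card K \<noteq> 0" using KV.q_ge2_loc by linarith
  hence pos: "card K ^ rk K n v \<noteq> 0" by simp
  have "card K ^ rk K n v * card kerv = card K ^ rk K n v * card K ^ (n - rk K n v)"
    using A B by metis
  thus ?thesis by (simp only: mult_left_cancel[OF pos])
qed

lemma kerv_subsp: "subsp K vsc kerv"
  using KV.Sv_subsp unfolding subsp_def kerv_def by (auto simp: dotp_add dotp_sc)

lemma kerv_sub: "kerv \<subseteq> Sv K n" by (auto simp: kerv_def)

end

context kmod begin

lemma lspan_sum: "x \<in> lspan S sc xs \<longleftrightarrow>
   (\<exists>c. (\<forall>j<length xs. c j \<in> S) \<and> x = (\<Sum>j<length xs. sc (c j) (xs ! j)))"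
proof (induct xs arbitrary: x)
  case Nil thus ?case by simp
next
  case (Cons a xs)
  show ?case
  proof
    assume "x \<in> lspan S sc (a # xs)"
    then obtain d y where dy: "x = sc d a + y" "d \<in> S" "y \<in> lspan S sc xs" by auto
    then obtain c where c: "\<forall>j<length xs. c j \<in> S" "y = (\<Sum>j<length xs. sc (c j) (xs ! j))" using Cons by blast
    define c' where "c' = (\<lambda>j. case j of 0 \<Rightarrow> d | Suc j \<Rightarrow> c j)"
    have "\<forall>j<length (a # xs). c' j \<in> S" using c dy by (auto simp: c'_def less_Suc_eq_0_disj)
    moreover have "x = (\<Sum>j<length (a # xs). sc (c' j) ((a # xs) ! j))"
      using dy c by (simp only: length_Cons sum.lessThan_Suc_shift) (simp add: c'_def)
    ultimately show "\<exists>c. (\<forall>j<length (a # xs). c j \<in> S) \<and> x = (\<Sum>j<length (a # xs). sc (c j) ((a # xs) ! j))"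
      by blast
  next
    assume "\<exists>c. (\<forall>j<length (a # xs). c j \<in> S) \<and> x = (\<Sum>j<length (a # xs). sc (c j) ((a # xs) ! j))"
    then obtain c where c: "\<forall>j<Suc (length xs). c j \<in> S" "x = (\<Sum>j<Suc (length xs). sc (c j) ((a # xs) ! j))" by auto
    have x: "x = sc (c 0) a + (\<Sum>j<length xs. sc (c (Suc j)) (xs ! j))"
      using c(2) by (simp only: sum.lessThan_Suc_shift) simp
    have "(\<Sum>j<length xs. sc (c (Suc j)) (xs ! j)) \<in> lspan S sc xs"
      unfolding Cons[of "\<Sum>j<length xs. sc (c (Suc j)) (xs ! j)"] using c(1)
      by (intro exI[of _ "\<lambda>j. c (Suc j)"]) auto
    moreover have "c 0 \<in> S" using c(1) by auto
    ultimately show "x \<in> lspan S sc (a # xs)" using x by auto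
  qed
qed

lemma lindep_sum: "lindep S sc xs \<Longrightarrow> (\<forall>j<length xs. c j \<in> S) \<Longrightarrow>
   (\<Sum>j<length xs. sc (c j) (xs ! j)) = 0 \<Longrightarrow> j < length xs \<Longrightarrow> c j = 0"
proof (induct xs arbitrary: c j)
  case Nil thus ?case by simp
next
  case (Cons a xs)
  define R where "R = (\<Sum>j<length xs. sc (c (Suc j)) (xs ! j))"
  have s: "sc (c 0) a + R = 0" using Cons.prems(3) unfolding R_def length_Cons sum.lessThan_Suc_shift by simp
  have RL: "R \<in> lspan S sc xs" unfolding R_def lspan_sum using Cons.prems(2)
    by (intro exI[of _ "\<lambda>j. c (Suc j)"]) auto
  have c0: "c 0 = 0"
  proof (rule ccontr)
    assume nz: "c 0 \<noteq> 0"
    have "sc (c 0) a = - R" using s by (simp add: eq_neg_iff_add_eq_0)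
    hence "sc (inverse (c 0)) (sc (c 0) a) = sc (inverse (c 0)) (- R)" by simp
    hence "a = sc (- inverse (c 0)) R" using nz by (simp add: sc_mult[symmetric] sc_one sc_minus sc_minus2)
    moreover have "sc (- inverse (c 0)) R \<in> lspan S sc xs"
      using RL Cons.prems(2) SF(5,6) by (intro subsp_sc[OF lspan_subsp]) auto
    ultimately show False using Cons.prems(1) by simp
  qed
  hence R0: "R = 0" using s by simp
  show ?case
  proof (cases j)
    case 0 thus ?thesis using c0 by simp
  next
    case (Suc j')
    have "(\<lambda>j. c (Suc j)) j' = 0"
      using Cons.hyps[of "\<lambda>j. c (Suc j)" j'] Cons.prems Suc R0 by (auto simp: R_def)
    thus ?thesis using Suc by simp
  qed
qed

end

lemma subfield_UNIV: "is_subfield (UNIV :: 'a::field set)"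
  by (simp add: is_subfield_def)

lemma Sv_UNIV: "Sv UNIV n = vecs n" by (auto simp: Sv_def vecs_def)

lemma dual_orth: "dual_code n C = orth UNIV n C"
  by (simp add: dual_code_def orth_def Sv_UNIV dotp_def)

locale mwctx =
  fixes K :: "'a::{field,finite} set" and q m n :: nat
  assumes sfK: "is_subfield K" and cK: "card K = q" and m1: "m \<ge> 1"
    and cU: "card (UNIV :: 'a set) = q ^ m"
begin

sublocale KV: vecsp K n by unfold_locales (auto simp: sfK)

interpretation FV: vecsp "UNIV :: 'a set" n by unfold_locales (auto simp: subfield_UNIV)

interpretation FK: kmod K "(*) :: 'a \<Rightarrow> 'a \<Rightarrow> 'a"
  by unfold_locales (auto simp: sfK algebra_simps)

lemma q2: "q \<ge> 2" using KV.q_ge2_loc cK by simp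

lemma basis: "\<exists>es. length es = m \<and> lindep K (*) es \<and> lspan K (*) es = (UNIV :: 'a set)"
proof -
  have "subsp K (*) (UNIV :: 'a set)" by (simp add: subsp_def)
  then obtain es where es: "lindep K (*) es" "lspan K (*) es = (UNIV :: 'a set)"
    using FK.basis_exists[of UNIV] by auto
  have "q ^ length es = q ^ m" using FK.card_lspan[OF es(1)] es(2) cU cK by simp
  hence "length es = m" using q2 by (simp add: power_inject_exp)
  thus ?thesis using es by blast
qed

definition es :: "'a list" where "es = (SOME es. length es = m \<and> lindep K (*) es \<and> lspan K (*) es = UNIV)"

lemma es: "length es = m" "lindep K (*) es" "lspan K (*) es = UNIV"
  using someI_ex[OF basis] unfolding es_def[symmetric] by auto

definition e :: "nat \<Rightarrow> 'a" where "e l = es ! l"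

lemma coord_ex: "\<exists>c. (\<forall>l<m. c l \<in> K) \<and> x = (\<Sum>l<m. c l * e l)"
  using es(3) FK.lspan_sum[of x es] es(1) by (auto simp: e_def)

definition kap :: "'a \<Rightarrow> nat \<Rightarrow> 'a" where
  "kap x = (SOME c. (\<forall>l<m. c l \<in> K) \<and> x = (\<Sum>l<m. c l * e l))"

lemma kap: "\<forall>l<m. kap x l \<in> K" "x = (\<Sum>l<m. kap x l * e l)"
  using someI_ex[OF coord_ex[of x]] unfolding kap_def[symmetric] by auto

lemma indep_e: "(\<forall>l<m. c l \<in> K) \<Longrightarrow> (\<Sum>l<m. c l * e l) = 0 \<Longrightarrow> l < m \<Longrightarrow> c l = 0"
  using FK.lindep_sum[OF es(2), of c l] es(1) by (simp add: e_def)

lemma kap_unique: assumes "\<forall>l<m. c l \<in> K" "x = (\<Sum>l<m. c l * e l)" "l < m" shows "kap x l = c l"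
proof -
  have "(\<Sum>l<m. (kap x l - c l) * e l) = 0"
    using kap(2)[of x] assms(2) by (simp add: algebra_simps sum_subtractf)
  moreover have "\<forall>l<m. kap x l - c l \<in> K" using kap(1) assms(1) KV.SF(7) by auto
  ultimately show ?thesis using indep_e[of "\<lambda>l. kap x l - c l" l] assms(3) by simp
qed

lemma kap_0: "l < m \<Longrightarrow> kap 0 l = 0"
  using kap_unique[of "\<lambda>_. 0" 0 l] KV.SF(1) by simp

definition rr :: "nat \<Rightarrow> (nat \<Rightarrow> 'a) \<Rightarrow> nat \<Rightarrow> 'a" where "rr l v = (\<lambda>i. kap (v i) l)"

lemma rr_in: "v \<in> vecs n \<Longrightarrow> l < m \<Longrightarrow> rr l v \<in> Sv K n"
  using kap(1) kap_0 by (auto simp: rr_def Sv_def vecs_def)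

lemma decomp: "dotp n w v = (\<Sum>l<m. dotp n w (rr l v) * e l)"
proof -
  have "dotp n w v = (\<Sum>i<n. w i * (\<Sum>l<m. kap (v i) l * e l))"
    unfolding dotp_def using kap(2) by (intro sum.cong) auto
  also have "\<dots> = (\<Sum>i<n. \<Sum>l<m. w i * kap (v i) l * e l)" by (simp add: sum_distrib_left mult.assoc)
  also have "\<dots> = (\<Sum>l<m. \<Sum>i<n. w i * kap (v i) l * e l)" by (rule sum.swap)
  also have "\<dots> = (\<Sum>l<m. dotp n w (rr l v) * e l)" by (simp add: dotp_def rr_def sum_distrib_right)
  finally show ?thesis .
qed

lemma dotp_zero_iff: assumes "w \<in> Sv K n" "v \<in> vecs n"
  shows "dotp n w v = 0 \<longleftrightarrow> (\<forall>l<m. dotp n w (rr l v) = 0)"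
proof
  assume h: "dotp n w v = 0"
  show "\<forall>l<m. dotp n w (rr l v) = 0"
  proof (intro allI impI)
    fix l assume l: "l < m"
    have "\<forall>l<m. dotp n w (rr l v) \<in> K" using assms rr_in KV.dotp_in by auto
    thus "dotp n w (rr l v) = 0" using indep_e[of "\<lambda>l. dotp n w (rr l v)" l] h decomp[of w v] l by simp
  qed
next
  assume "\<forall>l<m. dotp n w (rr l v) = 0"
  thus "dotp n w v = 0" using decomp[of w v] by simp
qed

lemma vec_recon: "v = (\<lambda>i. \<Sum>l<m. rr l v i * e l)"
  using kap(2) by (simp add: rr_def fun_eq_iff)

definition DW :: "(nat \<Rightarrow> 'a) set \<Rightarrow> (nat \<Rightarrow> 'a) set" where
  "DW W = {v \<in> vecs n. \<forall>a\<in>orth K n W. dotp n a v = 0}"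

lemma DW_alt: assumes "subsp K vsc W" "W \<subseteq> Sv K n"
  shows "DW W = {v \<in> vecs n. \<forall>l<m. rr l v \<in> W}"
proof -
  have "(\<forall>a\<in>orth K n W. dotp n a v = 0) \<longleftrightarrow> (\<forall>l<m. rr l v \<in> W)" if v: "v \<in> vecs n" for v
  proof -
    have "(\<forall>a\<in>orth K n W. dotp n a v = 0) \<longleftrightarrow> (\<forall>a\<in>orth K n W. \<forall>l<m. dotp n a (rr l v) = 0)"
      using dotp_zero_iff[OF _ v] KV.orth_sub by blast
    also have "\<dots> \<longleftrightarrow> (\<forall>l<m. rr l v \<in> orth K n (orth K n W))"
      using rr_in[OF v] by (auto simp: orth_def[of K n "orth K n W"])
    also have "\<dots> \<longleftrightarrow> (\<forall>l<m. rr l v \<in> W)" using KV.orth_orth[OF assms] by simp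
    finally show ?thesis .
  qed
  thus ?thesis unfolding DW_def by auto
qed

lemma card_DW: assumes "subsp K vsc W" "W \<subseteq> Sv K n"
  shows "card (DW W) = card W ^ m"
proof -
  define g where "g = (\<lambda>h :: nat \<Rightarrow> nat \<Rightarrow> 'a. \<lambda>i. \<Sum>l<m. h l i * e l)"
  have rr_g: "rr l (g h) = h l" if "h \<in> PiE {..<m} (\<lambda>_. W)" "l < m" for h l
  proof -
    have "rr l (g h) i = h l i" for i
    proof -
      have "\<forall>l<m. h l i \<in> K" using that assms(2) by (auto simp: PiE_def Pi_def Sv_def)
      thus ?thesis unfolding rr_def g_def using kap_unique[of "\<lambda>l. h l i" _ l] that(2) by simp
    qed
    thus ?thesis by (simp add: fun_eq_iff)
  qed
  have b: "bij_betw (\<lambda>v. restrict (\<lambda>l. rr l v) {..<m}) (DW W) (PiE {..<m} (\<lambda>_. W))"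
  proof (rule bij_betwI[where g = g])
    show "(\<lambda>v. restrict (\<lambda>l. rr l v) {..<m}) \<in> DW W \<rightarrow> PiE {..<m} (\<lambda>_. W)"
      unfolding DW_alt[OF assms] by auto
    show "g \<in> PiE {..<m} (\<lambda>_. W) \<rightarrow> DW W"
    proof
      fix h assume h: "h \<in> PiE {..<m} (\<lambda>_. W)"
      have "g h \<in> vecs n"
      proof -
        have "h l i = 0" if "l < m" "i \<ge> n" for l i using h that assms(2) by (auto simp: PiE_def Pi_def Sv_def)
        thus ?thesis by (auto simp: g_def vecs_def)
      qed
      moreover have "\<forall>l<m. rr l (g h) \<in> W" using rr_g[OF h] h by auto
      ultimately show "g h \<in> DW W" unfolding DW_alt[OF assms] by simp
    qed
    show "g (restrict (\<lambda>l. rr l v) {..<m}) = v" if "v \<in> DW W" for v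
      using vec_recon[of v] by (simp add: g_def)
    show "restrict (\<lambda>l. rr l (g h)) {..<m} = h" if "h \<in> PiE {..<m} (\<lambda>_. W)" for h
      using rr_g[OF that] that by (auto simp: fun_eq_iff PiE_def extensional_def)
  qed
  show ?thesis using bij_betw_same_card[OF b] by (simp add: card_PiE)
qed

lemma dotp_add2: "dotp n u (x + y) = dotp n u x + dotp n u y"
  by (simp add: dotp_def sum.distrib algebra_simps)
lemma dotp_sc2: "dotp n u (vsc c x) = c * dotp n u x"
  by (simp add: dotp_def vsc_def sum_distrib_left algebra_simps)

lemma DW_subsp: "subsp UNIV vsc (DW W)"
  unfolding subsp_def DW_def
  by (auto simp: dotp_add2 dotp_sc2 vecs_def) (auto simp: vsc_def)

lemma DW_sub: "DW W \<subseteq> Sv UNIV n" by (auto simp: DW_def Sv_UNIV)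

lemma orth_DW: assumes "subsp K vsc W" "W \<subseteq> Sv K n"
  shows "orth UNIV n (DW W) = orth UNIV n W"
proof (intro equalityI subsetI)
  fix c assume c: "c \<in> orth UNIV n (DW W)"
  have "W \<subseteq> DW W"
  proof
    fix w assume w: "w \<in> W"
    hence "w \<in> vecs n" using assms(2) by (auto simp: Sv_def vecs_def)
    moreover have "\<forall>a\<in>orth K n W. dotp n a w = 0" using w by (auto simp: orth_def dotp_comm)
    ultimately show "w \<in> DW W" by (simp add: DW_def)
  qed
  thus "c \<in> orth UNIV n W" using c by (auto simp: orth_def)
next
  fix c assume c: "c \<in> orth UNIV n W"
  have "dotp n v c = 0" if v: "v \<in> DW W" for v
  proof -
    have vv: "v \<in> vecs n" "\<forall>l<m. rr l v \<in> W" using v unfolding DW_alt[OF assms] by auto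
    have "dotp n v c = dotp n c v" by (rule dotp_comm)
    also have "\<dots> = (\<Sum>l<m. dotp n c (rr l v) * e l)" by (rule decomp)
    also have "\<dots> = 0" using vv(2) c by (auto simp: orth_def dotp_comm intro!: sum.neutral)
    finally show ?thesis .
  qed
  thus "c \<in> orth UNIV n (DW W)" using c by (auto simp: orth_def)
qed

end

lemma tri_unique:
  assumes q: "q \<ge> 2" and h: "\<forall>s\<le>n. (\<Sum>j\<le>n. gb q (n - j) s * X j) = 0"
  shows "j \<le> n \<Longrightarrow> X j = (0::real)"
proof (induct j rule: less_induct)
  case (less j)
  have "(\<Sum>j'\<le>n. gb q (n - j') (n - j) * X j') = (\<Sum>j'\<le>n. if j' = j then X j else 0)"
  proof (intro sum.cong refl)
    fix j' assume j': "j' \<in> {..n}"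
    consider "j' < j" | "j' = j" | "j' > j" by linarith
    thus "gb q (n - j') (n - j) * X j' = (if j' = j then X j else 0)"
    proof cases
      case 1 thus ?thesis using less by simp
    next
      case 2 thus ?thesis using gb_diag[OF q] by simp
    next
      case 3
      hence "n - j' < n - j" using j' less.prems by simp
      thus ?thesis using 3 by (simp add: gb_zero)
    qed
  qed
  also have "\<dots> = X j" using less.prems by simp
  finally show ?case using h less.prems by simp
qed

context mwctx
begin

interpretation FV: vecsp "UNIV :: 'a set" n by unfold_locales (auto simp: subfield_UNIV)

lemma key_W:
  assumes C: "subsp UNIV vsc C" "C \<subseteq> vecs n" and W: "subsp K vsc W" "W \<subseteq> Sv K n"
  shows "card C * card {v \<in> dual_code n C. \<forall>a\<in>orth K n W. dotp n a v = 0}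
       = card W ^ m * card {c\<in>C. \<forall>w\<in>W. dotp n w c = 0}"
proof -
  have "card C * card (DW W \<inter> orth UNIV n C) = card (DW W) * card (C \<inter> orth UNIV n (DW W))"
    using C by (intro FV.counting DW_subsp DW_sub) (auto simp: Sv_UNIV)
  moreover have "DW W \<inter> orth UNIV n C = {v \<in> dual_code n C. \<forall>a\<in>orth K n W. dotp n a v = 0}"
    by (auto simp: DW_def dual_orth orth_def Sv_UNIV)
  moreover have "C \<inter> orth UNIV n (DW W) = {c\<in>C. \<forall>w\<in>W. dotp n w c = 0}"
    unfolding orth_DW[OF W] using C(2) by (auto simp: orth_def Sv_UNIV)
  ultimately show ?thesis using card_DW[OF W] by simp
qed

definition cnt :: "(nat \<Rightarrow> 'a) set \<Rightarrow> (nat \<Rightarrow> 'a) set \<Rightarrow> nat" where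
  "cnt X W = card {v\<in>X. \<forall>w\<in>W. dotp n w v = 0}"

lemma finite_subs: "finite (subs K vsc (Sv K n) t)"
  by (rule finite_subset[of _ "Pow (Sv K n)"]) (auto simp: subs_def KV.finite_Sv)

lemma sum_cnt:
  assumes X: "X \<subseteq> vecs n"
  shows "(\<Sum>W\<in>subs K vsc (Sv K n) t. real (cnt X W)) = (\<Sum>j\<le>n. real (rank_dist K n X j) * gb q (n - j) t)"
proof -
  have fX: "finite X" using X FV.finite_Sv Sv_UNIV finite_subset by metis
  have "(\<Sum>W\<in>subs K vsc (Sv K n) t. real (cnt X W)) =
      (\<Sum>W\<in>subs K vsc (Sv K n) t. \<Sum>v\<in>X. if (\<forall>w\<in>W. dotp n w v = 0) then 1 else 0)"
    unfolding cnt_def using fX by (simp add: card_filter_sum)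
  also have "\<dots> = (\<Sum>v\<in>X. \<Sum>W\<in>subs K vsc (Sv K n) t. if (\<forall>w\<in>W. dotp n w v = 0) then 1 else 0)"
    by (rule sum.swap)
  also have "\<dots> = (\<Sum>v\<in>X. real (card {W\<in>subs K vsc (Sv K n) t. \<forall>w\<in>W. dotp n w v = 0}))"
    using finite_subs by (simp add: card_filter_sum)
  also have "\<dots> = (\<Sum>v\<in>X. gb q (n - rk K n v) t)"
  proof (intro sum.cong refl)
    fix v assume v: "v \<in> X"
    hence vv: "v \<in> vecs n" using X by auto
    have e: "{W\<in>subs K vsc (Sv K n) t. \<forall>w\<in>W. dotp n w v = 0} = subs K vsc (kerv K n v) t"
      by (auto simp: subs_def kerv_def[OF sfK])
    have fk: "finite (kerv K n v)" using kerv_sub[OF sfK] KV.finite_Sv finite_subset by metis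
    have "real (card (subs K vsc (kerv K n v) t)) * gam (card K) t t = gam (card K) (n - rk K n v) t"
      by (rule KV.count_subs[OF kerv_subsp[OF sfK] fk card_kerv[OF sfK vv]])
    moreover have "gam q t t \<noteq> 0" using gam_nz[OF q2] by simp
    ultimately show "real (card {W\<in>subs K vsc (Sv K n) t. \<forall>w\<in>W. dotp n w v = 0}) = gb q (n - rk K n v) t"
      unfolding e gb_def using cK by (simp add: field_simps)
  qed
  also have "\<dots> = (\<Sum>j\<le>n. \<Sum>v\<in>{v\<in>X. rk K n v = j}. gb q (n - rk K n v) t)"
    using rk_le[OF sfK] fX by (intro sum.group[symmetric]) auto
  also have "\<dots> = (\<Sum>j\<le>n. real (rank_dist K n X j) * gb q (n - j) t)"
    by (intro sum.cong refl) (simp add: rank_dist_def)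
  finally show ?thesis .
qed

lemma orth_bij: assumes "t \<le> n"
  shows "bij_betw (orth K n) (subs K vsc (Sv K n) t) (subs K vsc (Sv K n) (n - t))"
proof (rule bij_betwI[where g = "orth K n"])
  have qpos: "card K > 0" using q2 cK by simp
  hence Kne: "K \<noteq> {}" by auto
  show "orth K n \<in> subs K vsc (Sv K n) t \<rightarrow> subs K vsc (Sv K n) (n - t)"
  proof
    fix W assume W: "W \<in> subs K vsc (Sv K n) t"
    have "card W * card (orth K n W) = card K ^ n" using W by (intro KV.card_orth) (auto simp: subs_def)
    hence "card K ^ t * card (orth K n W) = card K ^ t * card K ^ (n - t)"
      using W assms by (simp add: subs_def power_add[symmetric])
    hence "card (orth K n W) = card K ^ (n - t)" using qpos Kne by simp
    thus "orth K n W \<in> subs K vsc (Sv K n) (n - t)" using KV.orth_subsp KV.orth_sub by (simp add: subs_def)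
  qed
  show "orth K n \<in> subs K vsc (Sv K n) (n - t) \<rightarrow> subs K vsc (Sv K n) t"
  proof
    fix W assume W: "W \<in> subs K vsc (Sv K n) (n - t)"
    have "card W * card (orth K n W) = card K ^ n" using W by (intro KV.card_orth) (auto simp: subs_def)
    hence "card K ^ (n - t) * card (orth K n W) = card K ^ (n - t) * card K ^ t"
      using W assms by (simp add: subs_def power_add[symmetric])
    hence "card (orth K n W) = card K ^ t" using qpos Kne by simp
    thus "orth K n W \<in> subs K vsc (Sv K n) t" using KV.orth_subsp KV.orth_sub by (simp add: subs_def)
  qed
  show "orth K n (orth K n W) = W" if "W \<in> subs K vsc (Sv K n) t" for W
    using that by (intro KV.orth_orth) (auto simp: subs_def)
  show "orth K n (orth K n W) = W" if "W \<in> subs K vsc (Sv K n) (n - t)" for W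
    using that by (intro KV.orth_orth) (auto simp: subs_def)
qed

lemma Dprime:
  assumes C: "subsp UNIV vsc C" "C \<subseteq> vecs n" and t: "t \<le> n"
  shows "real (card C) * (\<Sum>j\<le>n. real (rank_dist K n (dual_code n C) j) * gb q (n - j) (n - t))
       = real q ^ (t * m) * (\<Sum>i\<le>n. real (rank_dist K n C i) * gb q (n - i) t)"
proof -
  have "(\<Sum>W\<in>subs K vsc (Sv K n) t. real (card C) * real (cnt (dual_code n C) (orth K n W)))
      = (\<Sum>W\<in>subs K vsc (Sv K n) t. real q ^ (t * m) * real (cnt C W))"
  proof (intro sum.cong refl)
    fix W assume W: "W \<in> subs K vsc (Sv K n) t"
    have "card C * cnt (dual_code n C) (orth K n W) = card W ^ m * cnt C W"
      unfolding cnt_def using key_W[OF C, of W] W by (auto simp: subs_def orth_def[of K n W] dotp_comm)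
    hence "real (card C) * real (cnt (dual_code n C) (orth K n W)) = real (card W) ^ m * real (cnt C W)"
      by (metis of_nat_mult of_nat_power)
    thus "real (card C) * real (cnt (dual_code n C) (orth K n W)) = real q ^ (t * m) * real (cnt C W)"
      using W cK by (simp add: subs_def power_mult)
  qed
  moreover have "(\<Sum>W\<in>subs K vsc (Sv K n) t. real (cnt (dual_code n C) (orth K n W)))
      = (\<Sum>X\<in>subs K vsc (Sv K n) (n - t). real (cnt (dual_code n C) X))"
    by (rule sum.reindex_bij_betw[OF orth_bij[OF t]])
  moreover have "dual_code n C \<subseteq> vecs n" by (auto simp: dual_code_def)
  ultimately show ?thesis using sum_cnt[OF C(2), of t] sum_cnt[of "dual_code n C" "n - t"]
    by (simp add: sum_distrib_left[symmetric])
qed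

end

context mwctx
begin

lemma final:
  assumes C: "subsp UNIV vsc C" "C \<subseteq> vecs n"
  shows "(\<Sum>j\<le>n. real (rank_dist K n (dual_code n C) j) * y ^ j * x ^ (n - j))
    = (1 / real (card C)) *
      heval (qtransform_at q n (\<lambda>i. real (rank_dist K n C i)) (x_plus_qm1_y q) x_minus_y) (real m) x y"
proof -
  define A where "A = (\<lambda>i. real (rank_dist K n C i))"
  define B where "B = (\<lambda>j. real (rank_dist K n (dual_code n C) j))"
  define cC where "cC = real (card C)"
  have fC: "finite C" using C(2) KV.finite_Sv finite_subset
    by (metis Sv_UNIV vecsp.finite_Sv vecsp_def subfield_UNIV finite_UNIV)
  have "0 \<in> C" using C(1) by (simp add: subsp_def)
  hence cpos: "cC > 0" using fC by (auto simp: cC_def card_gt_0_iff)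
  define Bp where "Bp = (\<lambda>j. (1 / cC) * (\<Sum>i\<le>n. A i * hcoeff (PP q i (n - i)) j (real m)))"
  have Qe: "(real q powr real m) ^ k = real q ^ (k * m)" for k
    using q2 by (simp add: powr_realpow power_mult[symmetric] mult.commute)
  have eqs: "\<forall>s\<le>n. (\<Sum>j\<le>n. gb q (n - j) s * (B j - Bp j)) = 0"
  proof (intro allI impI)
    fix s assume s: "s \<le> n"
    have D: "cC * (\<Sum>j\<le>n. B j * gb q (n - j) s) = real q ^ ((n - s) * m) * (\<Sum>i\<le>n. A i * gb q (n - i) (n - s))"
      using Dprime[OF C, of "n - s"] s by (simp add: A_def B_def cC_def)
    have S1: "(\<Sum>j\<le>n. gb q (n - j) s * B j) = (1 / cC) * (real q ^ ((n - s) * m) * (\<Sum>i\<le>n. A i * gb q (n - i) (n - s)))"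
      using D cpos by (simp add: field_simps mult.commute)
    have P: "(\<Sum>j\<le>n. gb q (n - j) s * hcoeff (PP q i (n - i)) j (real m)) = real q ^ ((n - s) * m) * gb q (n - i) (n - s)"
      if i: "i \<le> n" for i
    proof -
      have "(\<Sum>j\<le>n. gb q (n - j) s * hcoeff (PP q i (n - i)) j (real m)) = Psi q s (PP q i (n - i)) (real m)"
        unfolding Psi_def fst_PP using i by (simp only: le_add_diff_inverse)
      also have "\<dots> = real q ^ ((n - s) * m) * gb q (n - i) (n - s)"
        unfolding Psi_PP[OF q2] using i s by (simp add: Qe)
      finally show ?thesis .
    qed
    have pw: "gb q (n - j) s * Bp j = (1 / cC) * (\<Sum>i\<le>n. A i * (gb q (n - j) s * hcoeff (PP q i (n - i)) j (real m)))" for j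
      unfolding Bp_def by (simp add: sum_distrib_left algebra_simps)
    have "(\<Sum>j\<le>n. gb q (n - j) s * Bp j) = (1 / cC) * (\<Sum>j\<le>n. \<Sum>i\<le>n. A i * (gb q (n - j) s * hcoeff (PP q i (n - i)) j (real m)))"
      unfolding pw by (simp add: sum_distrib_left)
    also have "\<dots> = (1 / cC) * (\<Sum>i\<le>n. \<Sum>j\<le>n. A i * (gb q (n - j) s * hcoeff (PP q i (n - i)) j (real m)))"
      by (subst sum.swap) (rule refl)
    also have "\<dots> = (1 / cC) * (\<Sum>i\<le>n. A i * (\<Sum>j\<le>n. gb q (n - j) s * hcoeff (PP q i (n - i)) j (real m)))"
      by (simp add: sum_distrib_left)
    also have "\<dots> = (1 / cC) * (\<Sum>i\<le>n. A i * (real q ^ ((n - s) * m) * gb q (n - i) (n - s)))"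
      using P by simp
    also have "\<dots> = (\<Sum>j\<le>n. gb q (n - j) s * B j)"
      unfolding S1 by (simp add: sum_distrib_left algebra_simps)
    finally have "(\<Sum>j\<le>n. gb q (n - j) s * Bp j) = (\<Sum>j\<le>n. gb q (n - j) s * B j)" .
    thus "(\<Sum>j\<le>n. gb q (n - j) s * (B j - Bp j)) = 0"
      by (simp add: right_diff_distrib sum_subtractf)
  qed
  have BB: "B j = Bp j" if "j \<le> n" for j
    using tri_unique[OF q2 eqs that] by simp
  have "(\<Sum>j\<le>n. B j * y ^ j * x ^ (n - j)) = (\<Sum>j\<le>n. Bp j * y ^ j * x ^ (n - j))"
    using BB by simp
  also have "\<dots> = (1 / cC) * heval (qtransform_at q n A (x_plus_qm1_y q) x_minus_y) (real m) x y"
    unfolding heval_def qtransform_at_def Bp_def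
    by (simp add: hcoeff_def[of "(n, _)"] PP_def sum_distrib_left sum_distrib_right algebra_simps)
  finally show ?thesis by (simp add: A_def B_def cC_def)
qed

end

lemma linear_code_subsp:
  assumes "linear_code n k C" shows "subsp UNIV vsc C" "C \<subseteq> vecs n"
proof -
  obtain b where b: "C = {vlincomb c b k | c. True}" using assms by (auto simp: linear_code_def)
  show "C \<subseteq> vecs n" using assms by (simp add: linear_code_def)
  have "0 = vlincomb (\<lambda>_. 0) b k" by (simp add: vlincomb_def fun_eq_iff)
  moreover have "vlincomb c b k + vlincomb d b k = vlincomb (\<lambda>j. c j + d j) b k" for c d
    by (simp add: vlincomb_def fun_eq_iff sum.distrib algebra_simps)
  moreover have "vsc a (vlincomb c b k) = vlincomb (\<lambda>j. a * c j) b k" for a c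
    by (simp add: vlincomb_def vsc_def fun_eq_iff sum_distrib_left algebra_simps)
  ultimately show "subsp UNIV vsc C" unfolding subsp_def b by blast
qed

theorem theorem2:
  fixes K :: "'a::{field,finite} set" and q m n k :: nat and C :: "(nat \<Rightarrow> 'a) set"
  assumes "is_subfield K" and "card K = q" and "m \<ge> 1" and "card (UNIV :: 'a set) = q ^ m"
    and "linear_code n k C"
  shows "\<forall>x y :: real.
    (\<Sum>j\<le>n. real (rank_dist K n (dual_code n C) j) * y ^ j * x ^ (n - j))
    = (1 / real (card C)) *
      heval (qtransform_at q n (\<lambda>i. real (rank_dist K n C i)) (x_plus_qm1_y q) x_minus_y)
            (real m) x y"
proof -
  interpret mwctx K q m n using assms(1-4) by unfold_locales auto
  show ?thesis using final[OF linear_code_subsp[OF assms(5)]] by blast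
qed

end
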